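(* Let $2^{t-1}<n\le 2^t-4$, $i=2^t-3-n$, $j=n-2^{t-1}+1$. Define $D_n=q_ip_n+q_{i+1}p_{n-1}+w_3q_{i-1}p_{n-2}$ and $A_n=r_{j-1}p_n+w_3r_{j-2}p_{n-1}+r_jp_{n-2}$ in $W_1$, and denote also by $A_n,D_n$ their images in ${\rm H}^*(\operatorname{Gr}_3(n);\mathbb{F}_2)$. Then $A_n,D_n$ lie in $K$, are homogeneous of degrees $\deg A_n=3n-2^t-1$ and $\deg D_n=2^t-4$, and the map sending the free generators $A,D$ to $A_n,D_n$ induces an isomorphism of graded $C$-modules \[ K\cong C\langle A,D\rangle\big/\big(q_iA+r_{j-1}D,\ q_{i+1}A+w_3r_{j-2}D,\ w_3q_{i-1}A+r_jD\big), \] the three relations having degrees $2n-4$, $2n-3$, $2n-2$.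
   Context: $W_1=\mathbb{F}_2[w_1,w_2,w_3]$ and $W_2=\mathbb{F}_2[w_2,w_3]$, graded by $\deg w_i=i$. $Q_m\in W_1$: $Q_0=1$, $Q_m=0$ for $m<0$, $Q_m=w_1Q_{m-1}+w_2Q_{m-2}+w_3Q_{m-3}$ for $m\ge1$; ${\rm H}^*(\operatorname{Gr}_3(n);\mathbb{F}_2)=W_1/(Q_{n-2},Q_{n-1},Q_n)$ with $w_i$ the Stiefel–Whitney classes of the tautological bundle. $q_m=Q_m|_{w_1=0}\in W_2$ (so $q_0=1$, $q_{m<0}=0$, $q_m=w_2q_{m-2}+w_3q_{m-3}$ for $m\ge1$); $r_0=1$, $r_{m<0}=0$, $r_{m+1}=w_2r_m+w_3^2r_{m-2}$. Viewing $q_m\in W_1$, $Q_m-q_m$ is divisible by $w_1$ and $p_m:=(Q_m-q_m)/w_1\in W_1$ (homogeneous of degree $m-1$). $C={\rm H}^*(\operatorname{Gr}_3(n);\mathbb{F}_2)/(w_1)=W_2/(q_{n-2},q_{n-1},q_n)$ and $K=\ker(w_1\cdot)$ on ${\rm H}^*(\operatorname{Gr}_3(n);\mathbb{F}_2)$, a $C$-module. *)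

theory Defs
  imports "HOL-Library.Z2" "HOL-Computational_Algebra.Polynomial"
begin

text \<open>W1 = F2[w1,w2,w3] as nested univariate polynomials: the outermost variable is w3,
  the middle one w2, the innermost one w1.\<close>
type_synonym W = "bit poly poly poly"

definition w1 :: W where "w1 = monom (monom (monom 1 1) 0) 0"
definition w2 :: W where "w2 = monom (monom (monom 1 0) 1) 0"
definition w3 :: W where "w3 = monom (monom (monom 1 0) 0) 1"

definition coeff3 :: "W \<Rightarrow> nat \<Rightarrow> nat \<Rightarrow> nat \<Rightarrow> bit" where
  "coeff3 P a b c = coeff (coeff (coeff P c) b) a"

text \<open>homogeneous of degree d for the grading deg w_i = i (zero is homogeneous of every degree)\<close>
definition whomog :: "int \<Rightarrow> W \<Rightarrow> bool" where
  "whomog d P \<longleftrightarrow> (\<forall>a b c. coeff3 P a b c \<noteq> 0 \<longrightarrow> int (a + 2*b + 3*c) = d)"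

definition inW2 :: "W \<Rightarrow> bool" where
  "inW2 P \<longleftrightarrow> (\<forall>a b c. coeff3 P a b c \<noteq> 0 \<longrightarrow> a = 0)"

fun Q :: "nat \<Rightarrow> W" where
  "Q 0 = 1"
| "Q (Suc 0) = w1 * Q 0"
| "Q (Suc (Suc 0)) = w1 * Q 1 + w2 * Q 0"
| "Q (Suc (Suc (Suc m))) = w1 * Q (m+2) + w2 * Q (m+1) + w3 * Q m"

fun q :: "nat \<Rightarrow> W" where
  "q 0 = 1"
| "q (Suc 0) = 0"
| "q (Suc (Suc 0)) = w2 * q 0"
| "q (Suc (Suc (Suc m))) = w2 * q (m+1) + w3 * q m"

fun r :: "nat \<Rightarrow> W" where
  "r 0 = 1"
| "r (Suc 0) = w2 * r 0"
| "r (Suc (Suc 0)) = w2 * r 1"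
| "r (Suc (Suc (Suc m))) = w2 * r (m+2) + w3^2 * r m"

definition p :: "nat \<Rightarrow> W" where
  "p m = (THE x. Q m - q m = w1 * x)"

text \<open>the ideal (Q_{n-2}, Q_{n-1}, Q_n) of W1, defining H^*(Gr_3(n))\<close>
definition Iid :: "nat \<Rightarrow> W set" where
  "Iid n = {a * Q (n-2) + b * Q (n-1) + c * Q n | a b c. True}"

text \<open>the ideal (q_{n-2}, q_{n-1}, q_n) of W2, defining C\<close>
definition Jid :: "nat \<Rightarrow> W set" where
  "Jid n = {a * q (n-2) + b * q (n-1) + c * q n | a b c. inW2 a \<and> inW2 b \<and> inW2 c}"

end

theory Submission imports Defs "HOL-Computational_Algebra.Field_as_Ring" "HOL-Computational_Algebra.Polynomial_Factorial" begin
instantiation bit ::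
  "{unique_euclidean_ring, normalization_euclidean_semiring, normalization_semidom_multiplicative}"
begin
definition [simp]: "normalize_bit = (normalize_field :: bit \<Rightarrow> _)"
definition [simp]: "unit_factor_bit = (unit_factor_field :: bit \<Rightarrow> _)"
definition [simp]: "euclidean_size_bit = (euclidean_size_field :: bit \<Rightarrow> _)"
definition [simp]: "division_segment (x :: bit) = 1"
instance
  by standard
    (auto simp add: dvd_field_iff field_split_simps modulo_bit_def split: if_splits)

end
instantiation bit :: euclidean_ring_gcd
begin
definition gcd_bit :: "bit \<Rightarrow> bit \<Rightarrow> bit" where
  "gcd_bit = Euclidean_Algorithm.gcd"
definition lcm_bit :: "bit \<Rightarrow> bit \<Rightarrow> bit" where
  "lcm_bit = Euclidean_Algorithm.lcm"
definition Gcd_bit :: "bit set \<Rightarrow> bit" where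
 "Gcd_bit = Euclidean_Algorithm.Gcd"
definition Lcm_bit :: "bit set \<Rightarrow> bit" where
 "Lcm_bit = Euclidean_Algorithm.Lcm"
instance by standard (simp_all add: gcd_bit_def lcm_bit_def Gcd_bit_def Lcm_bit_def)

end
instance bit :: field_gcd ..

declare bit_not_zero_iff[simp del] bit_not_one_iff[simp del] add_bit_eq_xor[simp del] mult_bit_eq_and[simp del] power_bit_unfold[simp del] modulo_bit_unfold[simp del]

lemma two_poly_bit: "(2::bit poly) = 0"
  by (metis bit_2_eq_0 of_nat_numeral of_nat_poly pCons_0_0)
lemma two_poly2_bit: "(2::bit poly poly) = 0"
  by (metis two_poly_bit of_nat_numeral of_nat_poly pCons_0_0)
lemma two_W: "(2::W) = 0"
  by (metis two_poly2_bit of_nat_numeral of_nat_poly pCons_0_0)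
lemma self_add_W[simp]: "(x::W) + x = 0"
  by (metis mult_2 two_W mult_zero_left)
lemma self_add_W2[simp]: "(x::W) + (x + y) = y"
  by (metis add.assoc self_add_W add_0)
lemma uminus_W[simp]: "- (x::W) = x"
  by (metis add_eq_0_iff self_add_W)
lemma diff_W[simp]: "(x::W) - y = x + y"
  by (metis diff_conv_add_uminus uminus_W)
lemma sq_add_W: "((x::W) + y)^2 = x^2 + y^2"
  by (simp add: power2_sum two_W)


lemma W_eqI: "(\<And>a b c. coeff3 P a b c = coeff3 R a b c) \<Longrightarrow> P = R"
  unfolding coeff3_def by (intro poly_eqI) blast

lemma coeff3_add[simp]: "coeff3 (P + R) a b c = coeff3 P a b c + coeff3 R a b c"
  by (simp add: coeff3_def)
lemma coeff3_0[simp]: "coeff3 0 a b c = 0"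
  by (simp add: coeff3_def)
lemma coeff3_mult: "coeff3 (P * R) a b c =
   (\<Sum>k\<le>c. \<Sum>l\<le>b. \<Sum>h\<le>a. coeff3 P h l k * coeff3 R (a-h) (b-l) (c-k))"
  by (simp add: coeff3_def coeff_mult coeff_sum)

lemma coeff3_1: "coeff3 1 a b c = (if a = 0 \<and> b = 0 \<and> c = 0 then 1 else 0)"
  by (simp add: coeff3_def coeff_1)
lemma coeff3_w1: "coeff3 w1 a b c = (if a = 1 \<and> b = 0 \<and> c = 0 then 1 else 0)"
  by (simp add: coeff3_def w1_def coeff_monom)
lemma coeff3_w2: "coeff3 w2 a b c = (if a = 0 \<and> b = 1 \<and> c = 0 then 1 else 0)"
  by (simp add: coeff3_def w2_def coeff_monom)
lemma coeff3_w3: "coeff3 w3 a b c = (if a = 0 \<and> b = 0 \<and> c = 1 then 1 else 0)"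
  by (simp add: coeff3_def w3_def coeff_monom)

lemma sum_nonzero_ex: "sum f A \<noteq> (0::'a::comm_monoid_add) \<Longrightarrow> \<exists>x\<in>A. f x \<noteq> 0"
  by (meson sum.neutral)

lemma whomog_0[simp]: "whomog d 0" by (simp add: whomog_def)
lemma whomog_add: "whomog d P \<Longrightarrow> whomog d R \<Longrightarrow> whomog d (P + R)"
  unfolding whomog_def by (metis coeff3_add add_0 add_0_right)
lemma whomog_mult: assumes "whomog d1 P" "whomog d2 R" shows "whomog (d1 + d2) (P * R)"
  unfolding whomog_def
proof (intro allI impI)
  fix a b c assume "coeff3 (P * R) a b c \<noteq> 0"
  then have "(\<Sum>k\<le>c. \<Sum>l\<le>b. \<Sum>h\<le>a. coeff3 P h l k * coeff3 R (a-h) (b-l) (c-k)) \<noteq> 0"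
    unfolding coeff3_mult .
  then obtain k where k: "k \<in> {..c}" and "(\<Sum>l\<le>b. \<Sum>h\<le>a. coeff3 P h l k * coeff3 R (a-h) (b-l) (c-k)) \<noteq> 0"
    using sum_nonzero_ex by blast
  then obtain l where l: "l \<in> {..b}" and "(\<Sum>h\<le>a. coeff3 P h l k * coeff3 R (a-h) (b-l) (c-k)) \<noteq> 0"
    using sum_nonzero_ex by blast
  then obtain h where h: "h \<in> {..a}" and nz: "coeff3 P h l k * coeff3 R (a-h) (b-l) (c-k) \<noteq> 0"
    using sum_nonzero_ex by blast
  have kl: "k \<le> c" "l \<le> b" "h \<le> a" using k l h by auto
  from nz have "coeff3 P h l k \<noteq> 0" "coeff3 R (a-h) (b-l) (c-k) \<noteq> 0" by auto
  with assms have "int (h + 2*l + 3*k) = d1" "int ((a-h) + 2*(b-l) + 3*(c-k)) = d2"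
    unfolding whomog_def by blast+
  with kl show "int (a + 2*b + 3*c) = d1 + d2" by linarith
qed
lemma whomog_cong: "whomog d P \<Longrightarrow> d = e \<Longrightarrow> whomog e P" by simp
lemma whomog_1: "whomog 0 1" by (simp add: whomog_def coeff3_1)
lemma whomog_w1: "whomog 1 w1" by (simp add: whomog_def coeff3_w1)
lemma whomog_w2: "whomog 2 w2" by (simp add: whomog_def coeff3_w2)
lemma whomog_w3: "whomog 3 w3" by (simp add: whomog_def coeff3_w3)
lemma whomog_multI: "whomog d1 P \<Longrightarrow> whomog d2 R \<Longrightarrow> d = d1 + d2 \<Longrightarrow> whomog d (P * R)"
  using whomog_mult by blast



section \<open>w1 := 0\<close>
definition e0 :: "bit poly \<Rightarrow> bit poly" where "e0 x = [:poly x 0:]"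
definition d0 :: "bit poly \<Rightarrow> bit poly" where "d0 x = synthetic_div x 0"
definition ev0 :: "W \<Rightarrow> W" where "ev0 P = map_poly (map_poly e0) P"
definition dw1 :: "W \<Rightarrow> W" where "dw1 P = map_poly (map_poly d0) P"

lemma coeff3_ev0: "coeff3 (ev0 P) a b c = (if a = 0 then coeff3 P 0 b c else 0)"
  by (simp add: coeff3_def ev0_def coeff_map_poly e0_def poly_0_coeff_0 coeff_pCons')
lemma coeff3_dw1: "coeff3 (dw1 P) a b c = coeff (d0 (coeff (coeff P c) b)) a"
  by (simp add: coeff3_def dw1_def coeff_map_poly d0_def)
lemma coeff3_w1_mult: "coeff3 (w1 * X) a b c = (if a = 0 then 0 else coeff3 X (a-1) b c)"
  by (cases a) (simp_all add: coeff3_def w1_def monom_0 coeff_monom_mult)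
lemma bitpoly_decomp: "(x::bit poly) = e0 x + monom 1 1 * d0 x"
proof -
  have "[:- 0, 1:] * synthetic_div x 0 + [:poly x 0:] = x" by (rule synthetic_div_correct')
  then have "[:0, 1:] * synthetic_div x 0 + [:poly x 0:] = x" by simp
  moreover have "[:0, 1:] = (monom 1 1 :: bit poly)" by (simp add: monom_Suc)
  ultimately show ?thesis unfolding e0_def d0_def by (metis add.commute)
qed
lemma ev0_decomp: "P = ev0 P + w1 * dw1 P"
proof (rule W_eqI)
  fix a b c
  have "coeff3 P a b c = coeff (e0 (coeff (coeff P c) b) + monom 1 1 * d0 (coeff (coeff P c) b)) a"
    unfolding coeff3_def by (subst bitpoly_decomp, rule refl)
  also have "\<dots> = coeff3 (ev0 P + w1 * dw1 P) a b c"
    unfolding coeff3_ev0 coeff3_w1_mult coeff3_dw1 coeff3_add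
    by (simp add: coeff_monom_mult e0_def coeff3_def poly_0_coeff_0 coeff_pCons')
  finally show "coeff3 P a b c = coeff3 (ev0 P + w1 * dw1 P) a b c" .
qed
lemma inW2_ev0: "inW2 (ev0 P)" by (simp add: inW2_def coeff3_ev0)
lemma ev0_id: "inW2 P \<Longrightarrow> ev0 P = P"
  by (rule W_eqI) (auto simp: inW2_def coeff3_ev0)
lemma ev0_add[simp]: "ev0 (P + R) = ev0 P + ev0 R"
  by (rule W_eqI) (simp add: coeff3_ev0)
lemma ev0_0[simp]: "ev0 0 = 0"
  by (rule W_eqI) (simp add: coeff3_ev0)
lemma ev0_mult[simp]: "ev0 (P * R) = ev0 P * ev0 R"
proof (rule W_eqI)
  fix a b c
  show "coeff3 (ev0 (P * R)) a b c = coeff3 (ev0 P * ev0 R) a b c"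
  proof (cases "a = 0")
    case True then show ?thesis by (simp add: coeff3_ev0 coeff3_mult)
  next
    case False
    have "coeff3 (ev0 P * ev0 R) a b c = 0" unfolding coeff3_mult
    proof (intro sum.neutral ballI)
      fix k l h assume "h \<in> {..a}"
      show "coeff3 (ev0 P) h l k * coeff3 (ev0 R) (a - h) (b - l) (c - k) = 0"
        using False by (cases "h = 0") (auto simp: coeff3_ev0)
    qed
    then show ?thesis using False by (simp add: coeff3_ev0)
  qed
qed
lemma inW2_w2: "inW2 w2" by (simp add: inW2_def coeff3_w2)
lemma inW2_w3: "inW2 w3" by (simp add: inW2_def coeff3_w3)
lemma inW2_1: "inW2 1" by (simp add: inW2_def coeff3_1)
lemma ev0_1[simp]: "ev0 1 = 1" by (rule ev0_id[OF inW2_1])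
lemma ev0_w2[simp]: "ev0 w2 = w2" by (rule ev0_id[OF inW2_w2])
lemma ev0_w3[simp]: "ev0 w3 = w3" by (rule ev0_id[OF inW2_w3])
lemma ev0_w1[simp]: "ev0 w1 = 0" by (rule W_eqI) (simp add: coeff3_ev0 coeff3_w1)
lemma ev0_pow[simp]: "ev0 (P ^ k) = ev0 P ^ k" by (induction k) auto
lemma inW2_0: "inW2 0" by (simp add: inW2_def)

lemma q_simps: "q 0 = 1" "q 1 = 0" "q 2 = w2" "q (m+3) = w2 * q (m+1) + w3 * q m"
  by (simp_all add: numeral_2_eq_2 numeral_3_eq_3)
lemma r_simps: "r 0 = 1" "r 1 = w2" "r 2 = w2^2" "r (m+3) = w2 * r (m+2) + w3^2 * r m"
  by (simp_all add: numeral_2_eq_2 numeral_3_eq_3 power2_eq_square)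
lemma Q_simps: "Q 0 = 1" "Q 1 = w1" "Q 2 = w1^2 + w2" "Q (m+3) = w1 * Q (m+2) + w2 * Q (m+1) + w3 * Q m"
  by (simp_all add: numeral_2_eq_2 numeral_3_eq_3 power2_eq_square)

definition qz :: "int \<Rightarrow> W" where "qz k = (if k < 0 then 0 else q (nat k))"
definition rz :: "int \<Rightarrow> W" where "rz k = (if k < 0 then 0 else r (nat k))"
definition Qz :: "int \<Rightarrow> W" where "Qz k = (if k < 0 then 0 else Q (nat k))"

lemma int_cases3: "k \<noteq> 0 \<Longrightarrow> (k < 0 \<Longrightarrow> P) \<Longrightarrow> (k = 1 \<Longrightarrow> P) \<Longrightarrow> (k = 2 \<Longrightarrow> P) \<Longrightarrow>
   (\<And>m. k = int m + 3 \<Longrightarrow> P) \<Longrightarrow> P" for k :: int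
proof -
  assume h: "k \<noteq> 0" "k < 0 \<Longrightarrow> P" "k = 1 \<Longrightarrow> P" "k = 2 \<Longrightarrow> P" "\<And>m. k = int m + 3 \<Longrightarrow> P"
  show P
  proof (cases "k < 3")
    case True then show ?thesis using h(1-4) by (cases "k < 0"; cases "k = 1"; auto)
  next
    case False then have "k = int (nat (k - 3)) + 3" by simp
    then show ?thesis by (rule h(5))
  qed
qed


lemma qz_neg[simp]: "k < 0 \<Longrightarrow> qz k = 0" by (simp add: qz_def)
lemma rz_neg[simp]: "k < 0 \<Longrightarrow> rz k = 0" by (simp add: rz_def)
lemma Qz_neg[simp]: "k < 0 \<Longrightarrow> Qz k = 0" by (simp add: Qz_def)
lemma qz_nat[simp]: "qz (int m) = q m" by (simp add: qz_def)
lemma rz_nat[simp]: "rz (int m) = r m" by (simp add: rz_def)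
lemma Qz_nat[simp]: "Qz (int m) = Q m" by (simp add: Qz_def)

lemma qz_rec: "k \<noteq> 0 \<Longrightarrow> qz k = w2 * qz (k-2) + w3 * qz (k-3)"
proof (erule int_cases3)
  fix m assume "k = int m + 3"
  moreover have "q (m+3) = w2 * q (m+1) + w3 * q m" by (rule q_simps(4))
  ultimately show ?thesis by (simp add: qz_def nat_add_distrib)
qed (auto simp: qz_def q_simps)

lemma rz_rec: "k \<noteq> 0 \<Longrightarrow> rz k = w2 * rz (k-1) + w3^2 * rz (k-3)"
proof (erule int_cases3)
  fix m assume "k = int m + 3"
  moreover have "r (m+3) = w2 * r (m+2) + w3^2 * r m" by (rule r_simps(4))
  ultimately show ?thesis by (simp add: rz_def nat_add_distrib)
qed (auto simp: rz_def r_simps power2_eq_square)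

lemma Qz_rec: "k \<noteq> 0 \<Longrightarrow> Qz k = w1 * Qz (k-1) + w2 * Qz (k-2) + w3 * Qz (k-3)"
proof (erule int_cases3)
  fix m assume "k = int m + 3"
  moreover have "Q (m+3) = w1 * Q (m+2) + w2 * Q (m+1) + w3 * Q m" by (rule Q_simps(4))
  ultimately show ?thesis by (simp add: Qz_def nat_add_distrib)
qed (auto simp: Qz_def Q_simps power2_eq_square)

lemma char2I: "x = y + 2 * z \<Longrightarrow> x = (y::W)" by (simp add: two_W)

lemma qz_double_aux: "\<forall>k < int N. qz (2*k) = qz k ^2 + w2 * qz (k-1)^2 \<and> qz (2*k+1) = w3 * qz (k-1)^2"
proof (induction N)
  case 0 then show ?case by auto
next
  case (Suc N)
  show ?case
  proof (intro allI impI)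
    fix k assume k: "k < int (Suc N)"
    show "qz (2*k) = qz k ^2 + w2 * qz (k-1)^2 \<and> qz (2*k+1) = w3 * qz (k-1)^2"
    proof (cases "k < int N")
      case True then show ?thesis using Suc.IH by blast
    next
      case False
      then have kN: "k = int N" using k by simp
      show ?thesis
      proof (cases "k = 0")
        case True then show ?thesis by (simp add: qz_def)
      next
        case False
        have lt: "k - 1 < int N" "k - 2 < int N" using kN by simp_all
        from Suc.IH[rule_format, OF lt(1)] have ih1: "qz (2*(k-1)) = qz (k-1) ^2 + w2 * qz (k-2)^2"
          and ih3: "qz (2*(k-1)+1) = w3 * qz (k-2)^2"
          by simp_all
        from Suc.IH[rule_format, OF lt(2)] have ih2: "qz (2*(k-2)+1) = w3 * qz (k-3)^2"
          by simp
        have r1: "qz (2*k) = w2 * qz (2*(k-1)) + w3 * qz (2*(k-2)+1)"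
          using qz_rec[of "2*k"] False by (simp add: algebra_simps)
        have odd: "2*k+1 \<noteq> 0" by presburger
        have r2: "qz (2*k+1) = w2 * qz (2*(k-1)+1) + w3 * qz (2*(k-1))"
          using qz_rec[OF odd] by (simp add: algebra_simps)
        have r3: "qz k = w2 * qz (k-2) + w3 * qz (k-3)" using qz_rec False by blast
        have "qz (2*k) = qz k ^2 + w2 * qz (k-1)^2"
          unfolding r1 ih1 ih2 r3 by (rule char2I[where z = "- (w2 * w3 * qz (k - 2) * qz (k - 3))"]) algebra
        moreover have "qz (2*k+1) = w3 * qz (k-1)^2"
          unfolding r2 ih1 ih3 by (rule char2I[where z = "w2 * w3 * qz (k - 2)^2"]) algebra
        ultimately show ?thesis ..
      qed
    qed
  qed
qed

lemma qz_double: "qz (2*k) = qz k ^2 + w2 * qz (k-1)^2" "qz (2*k+1) = w3 * qz (k-1)^2"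
proof -
  have "qz (2*k) = qz k ^2 + w2 * qz (k-1)^2 \<and> qz (2*k+1) = w3 * qz (k-1)^2"
  proof (cases "k < 0")
    case True then show ?thesis by simp
  next
    case False then have "k < int (Suc (nat k))" by simp
    then show ?thesis using qz_double_aux by blast
  qed
  then show "qz (2*k) = qz k ^2 + w2 * qz (k-1)^2" "qz (2*k+1) = w3 * qz (k-1)^2" by blast+
qed

lemma qz_pow2: "s \<ge> 1 \<Longrightarrow> qz (2^s - 3) = 0"
proof (induction s rule: nat_induct_at_least)
  case base then show ?case by simp
next
  case (Suc s)
  have "(2::int)^Suc s - 3 = 2 * (2^s - 2) + 1" by simp
  then show ?case using qz_double(2)[of "2^s - 2"] Suc.IH by simp
qed


lemma qz_0[simp]: "qz 0 = 1" by (simp add: qz_def)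
lemma rz_0[simp]: "rz 0 = 1" by (simp add: rz_def)
lemma Qz_0[simp]: "Qz 0 = 1" by (simp add: Qz_def)

lemma ident_step:
  fixes a0 a1 a2 a3 b0 b1 b2 b3 c1 c2 c3 c4 :: W
  assumes "c1 = w3 * b0 * a2 + b1 * a3" "c2 = b2 * a2 + w3 * b1 * a1" "c3 = b2 * a3 + w3^2 * b0 * a1"
    "b3 = w2 * b2 + w3^2 * b0" "a3 = w2 * a1 + w3 * a0" "c4 = w2 * c2 + w3 * c1"
  shows "c2 = w3 * b1 * a1 + b2 * a2" "c3 = b3 * a1 + w3 * b2 * a0" "c4 = b3 * a2 + w3^2 * b1 * a0"
proof -
  show "c2 = w3 * b1 * a1 + b2 * a2" using assms by (simp add: algebra_simps)
  show "c3 = b3 * a1 + w3 * b2 * a0" using assms by (simp add: algebra_simps power2_eq_square)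
  show "c4 = b3 * a2 + w3^2 * b1 * a0"
    unfolding assms(6,1,2,4) assms(5)
    by (rule char2I[where z = "w2*w3*b1*a1"]) algebra
qed

lemma ident_aux:
  fixes N :: int
  assumes N: "qz (N - 3) = 0"
  shows "int J \<le> N - 2 \<Longrightarrow>
    qz (N-3+int J) = w3 * rz (int J-2) * qz (N-2-int J) + rz (int J - 1) * qz (N-1-int J) \<and>
    qz (N-2+int J) = rz (int J) * qz (N-2-int J) + w3 * rz (int J-1) * qz (N-3-int J) \<and>
    qz (N-1+int J) = rz (int J) * qz (N-1-int J) + w3^2 * rz (int J-2) * qz (N-3-int J)"
proof (induction J)
  case 0 then show ?case using N by simp
next
  case (Suc J)
  define j where "j = int J"
  have jS: "int (Suc J) = j + 1" by (simp add: j_def)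
  have jle: "j + 1 \<le> N - 2" using Suc.prems jS by simp
  from Suc.IH jle have IH:
    "qz (N-3+j) = w3 * rz (j-2) * qz (N-2-j) + rz (j - 1) * qz (N-1-j)"
    "qz (N-2+j) = rz j * qz (N-2-j) + w3 * rz (j-1) * qz (N-3-j)"
    "qz (N-1+j) = rz j * qz (N-1-j) + w3^2 * rz (j-2) * qz (N-3-j)"
    by (simp_all add: j_def)
  have j0: "j \<ge> 0" by (simp add: j_def)
  have rb: "rz (j+1) = w2 * rz j + w3^2 * rz (j-2)" using rz_rec[of "j+1"] j0 by simp
  have ra: "qz (N-1-j) = w2 * qz (N-3-j) + w3 * qz (N-4-j)" using qz_rec[of "N-1-j"] jle
    by (simp add: algebra_simps)
  have rc: "qz (N+j) = w2 * qz (N-2+j) + w3 * qz (N-3+j)" using qz_rec[of "N+j"] jle j0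
    by (simp add: algebra_simps)
  note st = ident_step[OF IH rb ra rc]
  have e1: "N - 3 + (j+1) = N - 2 + j" "j + 1 - 2 = j - 1" "N - 2 - (j+1) = N - 3 - j"
    "j + 1 - 1 = j" "N - 1 - (j+1) = N - 2 - j" "N - 2 + (j+1) = N - 1 + j" "N - 3 - (j+1) = N - 4 - j"
    "N - 1 + (j+1) = N + j"
    by simp_all
  show ?case unfolding jS e1 using st by (simp add: algebra_simps)
qed

lemma ident:
  fixes N j :: int
  assumes N: "qz (N - 3) = 0" and "0 \<le> j" "j \<le> N - 2"
  shows "qz (N-3+j) = w3 * rz (j-2) * qz (N-2-j) + rz (j - 1) * qz (N-1-j)"
    "qz (N-2+j) = rz j * qz (N-2-j) + w3 * rz (j-1) * qz (N-3-j)"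
    "qz (N-1+j) = rz j * qz (N-1-j) + w3^2 * rz (j-2) * qz (N-3-j)"
proof -
  have "j = int (nat j)" using assms by simp
  then show "qz (N-3+j) = w3 * rz (j-2) * qz (N-2-j) + rz (j - 1) * qz (N-1-j)"
    "qz (N-2+j) = rz j * qz (N-2-j) + w3 * rz (j-1) * qz (N-3-j)"
    "qz (N-1+j) = rz j * qz (N-1-j) + w3^2 * rz (j-2) * qz (N-3-j)"
    using ident_aux[OF N, of "nat j"] assms by simp_all
qed


fun pr :: "nat \<Rightarrow> W" where
  "pr 0 = 0"
| "pr (Suc 0) = 1"
| "pr (Suc (Suc 0)) = w1"
| "pr (Suc (Suc (Suc m))) = Q (m+2) + w2 * pr (m+1) + w3 * pr m"

lemma Q_decomp: "Q m = q m + w1 * pr m"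
proof (induction m rule: pr.induct)
  case (4 m)
  have "Q (Suc (Suc (Suc m))) = w1 * Q (m+2) + w2 * Q (m+1) + w3 * Q m"
    using Q_simps(4)[of m] by (simp add: numeral_3_eq_3)
  also have "\<dots> = q (Suc (Suc (Suc m))) + w1 * pr (Suc (Suc (Suc m)))"
    using 4 q_simps(4)[of m] by (simp add: algebra_simps numeral_3_eq_3)
  finally show ?case .
qed (simp_all add: power2_eq_square)

lemma w1_nz: "w1 \<noteq> 0"
proof
  assume "w1 = 0" then have "coeff3 w1 1 0 0 = 0" by simp
  then show False by (simp add: coeff3_w1)
qed
lemma w3_nz: "w3 \<noteq> 0"
proof
  assume "w3 = 0" then have "coeff3 w3 0 0 1 = 0" by simp
  then show False by (simp add: coeff3_w3)
qed

lemma p_eq: "p m = pr m"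
  unfolding p_def
proof (rule the_equality)
  show "Q m - q m = w1 * pr m" by (metis Q_decomp add_diff_cancel_left')
  fix x assume "Q m - q m = w1 * x"
  then have "w1 * x = w1 * pr m" by (metis Q_decomp add_diff_cancel_left')
  then show "x = pr m" using w1_nz by simp
qed

lemma hq: "whomog (int m) (q m)"
proof (induction m rule: q.induct)
  case 1 then show ?case using whomog_1 by simp
next
  case 2 then show ?case by simp
next
  case 3 then show ?case using whomog_multI[OF whomog_w2 whomog_1] by simp
next
  case (4 m)
  show ?case unfolding q.simps
    by (rule whomog_add; rule whomog_multI[OF _ 4(1)] whomog_multI[OF _ 4(2)];
        (rule whomog_w2 | rule whomog_w3 | simp))
qed

lemma hr: "whomog (2 * int m) (r m)"
proof (induction m rule: r.induct)
  case 1 then show ?case using whomog_1 by simp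
next
  case 2 then show ?case using whomog_multI[OF whomog_w2 whomog_1] by simp
next
  case 3 then show ?case using whomog_multI[OF whomog_w2 3] by simp
next
  case (4 m)
  have w32: "whomog 6 (w3^2)" using whomog_multI[OF whomog_w3 whomog_w3] by (simp add: power2_eq_square)
  show ?case unfolding r.simps
    by (rule whomog_add; rule whomog_multI[OF _ 4(1)] whomog_multI[OF _ 4(2)];
        (rule whomog_w2 | rule w32 | simp))
qed

lemma hQ: "whomog (int m) (Q m)"
proof (induction m rule: Q.induct)
  case 1 then show ?case using whomog_1 by simp
next
  case 2 then show ?case using whomog_multI[OF whomog_w1 whomog_1] by simp
next
  case 3
  have a: "whomog 2 (w1 * Q 1)" by (rule whomog_multI[OF whomog_w1 3(1)]) simp
  have b: "whomog 2 (w2 * Q 0)" by (rule whomog_multI[OF whomog_w2 3(2)]) simp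
  show ?case using whomog_add[OF a b] by simp
next
  case (4 m)
  have a: "whomog (int m + 3) (w1 * Q (m+2))" by (rule whomog_multI[OF whomog_w1 4(1)]) simp
  have b: "whomog (int m + 3) (w2 * Q (m+1))" by (rule whomog_multI[OF whomog_w2 4(2)]) simp
  have c: "whomog (int m + 3) (w3 * Q m)" by (rule whomog_multI[OF whomog_w3 4(3)]) simp
  show ?case using whomog_add[OF whomog_add[OF a b] c] by (simp add: add.commute)
qed

lemma hpr: "whomog (int m - 1) (pr m)"
proof (induction m rule: pr.induct)
  case 1 then show ?case by simp
next
  case 2 then show ?case using whomog_1 by simp
next
  case 3 then show ?case using whomog_w1 by simp
next
  case (4 m)
  have a: "whomog (int m + 2) (Q (m+2))" using hQ[of "m+2"] by (simp add: add.commute)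
  have b: "whomog (int m + 2) (w2 * pr (m+1))" by (rule whomog_multI[OF whomog_w2 4(1)]) simp
  have c: "whomog (int m + 2) (w3 * pr m)" by (rule whomog_multI[OF whomog_w3 4(2)]) simp
  show ?case using whomog_add[OF whomog_add[OF a b] c] by (simp add: add.commute)
qed

lemma ev0_q[simp]: "ev0 (q m) = q m"
  by (induction m rule: q.induct) simp_all
lemma ev0_r[simp]: "ev0 (r m) = r m"
  by (induction m rule: r.induct) simp_all
lemma ev0_Q[simp]: "ev0 (Q m) = q m"
  by (induction m rule: Q.induct) simp_all
lemma inW2_q: "inW2 (q m)" by (metis ev0_q inW2_ev0)
lemma inW2_r: "inW2 (r m)" by (metis ev0_r inW2_ev0)


section \<open>homogeneous components\<close>
definition imap :: "(nat \<Rightarrow> 'a::zero \<Rightarrow> 'b::zero) \<Rightarrow> 'a poly \<Rightarrow> 'b poly" where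
  "imap f xp = Poly (map (\<lambda>i. f i (coeff xp i)) [0..<Suc (degree xp)])"

lemma coeff_imap: assumes "\<And>i. f i 0 = 0" shows "coeff (imap f xp) n = f n (coeff xp n)"
proof (cases "n \<le> degree xp")
  case True then show ?thesis
    by (simp add: imap_def nth_default_def del: upt_Suc)
next
  case False then have "coeff xp n = 0" by (simp add: coeff_eq_0)
  with False show ?thesis by (simp add: imap_def nth_default_def assms del: upt_Suc)
qed

lemma imap_zero: assumes "\<And>i. f i 0 = 0" shows "imap f 0 = 0"
  by (rule poly_eqI) (simp add: coeff_imap assms)

definition hc :: "nat \<Rightarrow> W \<Rightarrow> W" where
  "hc d P = imap (\<lambda>c Pc. imap (\<lambda>b x. imap (\<lambda>a y. if a + 2*b + 3*c = d then y else 0) x) Pc) P"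

lemma coeff3_hc: "coeff3 (hc d P) a b c = (if a + 2*b + 3*c = d then coeff3 P a b c else 0)"
proof -
  have z1: "\<And>b c. (\<lambda>a y. if a + 2*b + 3*c = d then y else (0::bit)) a 0 = 0" for a by simp
  have z2: "\<And>c. imap (\<lambda>a y. if a + 2*b + 3*c = d then y else (0::bit)) 0 = 0" for b
    by (rule imap_zero) simp
  have z3: "imap (\<lambda>b x. imap (\<lambda>a y. if a + 2*b + 3*c = d then y else (0::bit)) x) 0 = 0" for c
    by (rule imap_zero) (simp add: z2)
  show ?thesis unfolding hc_def coeff3_def
    by (simp add: coeff_imap z2 z3)
qed

lemma coeff3_sum: "coeff3 (sum f S) a b c = (\<Sum>x\<in>S. coeff3 (f x) a b c)"
  by (simp add: coeff3_def coeff_sum)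

lemma delta_sum: "(\<Sum>i\<le>d. (if u = i then X else 0) * (if v = d - i then Y else 0)) =
   (if u + v = d then X * Y else (0::bit))" for d u v :: nat
proof -
  have "(\<Sum>i\<le>d. (if u = i then X else 0) * (if v = d - i then Y else 0)) =
        (\<Sum>i\<in>{..d}. (if i = u then (if v = d - u then X * Y else 0) else 0))"
    by (rule sum.cong) auto
  also have "\<dots> = (if u \<in> {..d} then (if v = d - u then X * Y else 0) else 0)"
    by (rule sum.delta) simp
  also have "\<dots> = (if u + v = d then X * Y else 0)"
    by (cases "u + v = d") auto
  finally show ?thesis .
qed

lemma hc_mult: "hc d (A * B) = (\<Sum>i\<le>d. hc i A * hc (d-i) B)"
proof (rule W_eqI)
  fix a b c
  have "coeff3 (\<Sum>i\<le>d. hc i A * hc (d-i) B) a b c =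
    (\<Sum>i\<le>d. \<Sum>k\<le>c. \<Sum>l\<le>b. \<Sum>h\<le>a. (if h + 2*l + 3*k = i then coeff3 A h l k else 0) *
       (if (a-h) + 2*(b-l) + 3*(c-k) = d - i then coeff3 B (a-h) (b-l) (c-k) else 0))"
    by (simp add: coeff3_sum coeff3_mult coeff3_hc)
  also have "\<dots> = (\<Sum>k\<le>c. \<Sum>l\<le>b. \<Sum>h\<le>a. \<Sum>i\<le>d. (if h + 2*l + 3*k = i then coeff3 A h l k else 0) *
       (if (a-h) + 2*(b-l) + 3*(c-k) = d - i then coeff3 B (a-h) (b-l) (c-k) else 0))"
    by (simp only: sum.swap[of _ "{..d}"])
  also have "\<dots> = (\<Sum>k\<le>c. \<Sum>l\<le>b. \<Sum>h\<le>a. if a + 2*b + 3*c = d then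
       coeff3 A h l k * coeff3 B (a-h) (b-l) (c-k) else 0)"
    apply (rule sum.cong[OF refl])+
    apply (subst delta_sum)
    apply auto
    done
  also have "\<dots> = coeff3 (hc d (A * B)) a b c"
    by (simp add: coeff3_hc coeff3_mult)
  finally show "coeff3 (hc d (A * B)) a b c = coeff3 (\<Sum>i\<le>d. hc i A * hc (d-i) B) a b c" by simp
qed

lemma whomog_hc: "whomog (int e) P \<longleftrightarrow> (\<forall>d. d \<noteq> e \<longrightarrow> hc d P = 0)"
proof
  assume h: "whomog (int e) P"
  show "\<forall>d. d \<noteq> e \<longrightarrow> hc d P = 0"
  proof (intro allI impI)
    fix d assume "d \<noteq> e"
    show "hc d P = 0"
    proof (rule W_eqI)
      fix a b c show "coeff3 (hc d P) a b c = coeff3 0 a b c"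
      proof (cases "coeff3 P a b c = 0")
        case False
        then have "int (a + 2*b + 3*c) = int e" using h unfolding whomog_def by blast
        then have "a + 2*b + 3*c = e" by (simp only: of_nat_eq_iff)
        then show ?thesis using \<open>d \<noteq> e\<close> by (simp add: coeff3_hc)
      qed (simp add: coeff3_hc)
    qed
  qed
next
  assume h: "\<forall>d. d \<noteq> e \<longrightarrow> hc d P = 0"
  show "whomog (int e) P" unfolding whomog_def
  proof (intro allI impI)
    fix a b c assume nz: "coeff3 P a b c \<noteq> 0"
    have "coeff3 (hc (a + 2*b + 3*c) P) a b c \<noteq> 0" using nz by (simp add: coeff3_hc)
    then have "hc (a + 2*b + 3*c) P \<noteq> 0" by (metis coeff3_0)
    then have "a + 2*b + 3*c = e" using h by blast
    then show "int (a + 2*b + 3*c) = int e" by simp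
  qed
qed

lemma coeff3_bound: assumes "coeff3 P a b c \<noteq> 0"
  shows "a + 2*b + 3*c \<le> 3 * (\<Sum>c'\<le>degree P. \<Sum>b'\<le>degree (coeff P c'). (c' + b' + degree (coeff (coeff P c') b')))"
proof -
  have c: "c \<le> degree P" using assms by (metis coeff3_def coeff_0 le_degree)
  have b: "b \<le> degree (coeff P c)" using assms by (metis coeff3_def coeff_0 le_degree)
  have a: "a \<le> degree (coeff (coeff P c) b)" using assms by (metis coeff3_def le_degree)
  have "c + b + degree (coeff (coeff P c) b) \<le> (\<Sum>b'\<le>degree (coeff P c). (c + b' + degree (coeff (coeff P c) b')))"
    by (rule member_le_sum) (use b in auto)
  also have "\<dots> \<le> (\<Sum>c'\<le>degree P. \<Sum>b'\<le>degree (coeff P c'). (c' + b' + degree (coeff (coeff P c') b')))"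
    by (rule member_le_sum[where f = "\<lambda>c'. \<Sum>b'\<le>degree (coeff P c'). (c' + b' + degree (coeff (coeff P c') b'))"]) (use c in auto)
  finally show ?thesis using a by linarith
qed

lemma hc_bound: "\<exists>K. \<forall>d. hc d P \<noteq> 0 \<longrightarrow> d \<le> K"
proof (intro exI allI impI)
  fix d assume "hc d P \<noteq> 0"
  then obtain a b c where "coeff3 (hc d P) a b c \<noteq> 0" using W_eqI[of "hc d P" 0] by auto
  then have "coeff3 P a b c \<noteq> 0" "a + 2*b + 3*c = d" by (auto simp: coeff3_hc split: if_splits)
  then show "d \<le> 3 * (\<Sum>c'\<le>degree P. \<Sum>b'\<le>degree (coeff P c'). (c' + b' + degree (coeff (coeff P c') b')))"
    using coeff3_bound by blast
qed

lemma hc_exists: "P \<noteq> 0 \<Longrightarrow> \<exists>d. hc d P \<noteq> 0"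
proof -
  assume "P \<noteq> 0"
  then obtain a b c where nz: "coeff3 P a b c \<noteq> 0" using W_eqI[of P 0] by auto
  then have "coeff3 (hc (a + 2*b + 3*c) P) a b c \<noteq> 0" by (simp add: coeff3_hc)
  then have "hc (a + 2*b + 3*c) P \<noteq> 0" by (metis coeff3_0)
  then show ?thesis by blast
qed

definition htop :: "W \<Rightarrow> nat" where "htop P = (GREATEST d. hc d P \<noteq> 0)"
definition hbot :: "W \<Rightarrow> nat" where "hbot P = (LEAST d. hc d P \<noteq> 0)"

lemma htop: assumes "P \<noteq> 0" shows "hc (htop P) P \<noteq> 0" "\<And>d. hc d P \<noteq> 0 \<Longrightarrow> d \<le> htop P"
proof -
  obtain d0 where d0: "hc d0 P \<noteq> 0" using hc_exists[OF assms] by blast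
  obtain K where K: "\<And>d. hc d P \<noteq> 0 \<Longrightarrow> d \<le> K" using hc_bound by blast
  show "hc (htop P) P \<noteq> 0" unfolding htop_def by (rule GreatestI_nat[where P = "\<lambda>d. hc d P \<noteq> 0", OF d0 K])
  fix d assume "hc d P \<noteq> 0"
  then show "d \<le> htop P" unfolding htop_def by (rule Greatest_le_nat[where P = "\<lambda>d. hc d P \<noteq> 0", OF _ K])
qed

lemma hbot: assumes "P \<noteq> 0" shows "hc (hbot P) P \<noteq> 0" "\<And>d. hc d P \<noteq> 0 \<Longrightarrow> hbot P \<le> d"
proof -
  obtain d0 where d0: "hc d0 P \<noteq> 0" using hc_exists[OF assms] by blast
  show "hc (hbot P) P \<noteq> 0" unfolding hbot_def by (rule LeastI[of _ d0]) (rule d0)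
  fix d assume "hc d P \<noteq> 0"
  then show "hbot P \<le> d" unfolding hbot_def by (rule Least_le)
qed

lemma hc_mult_top: assumes "A \<noteq> 0" "B \<noteq> 0"
  shows "hc (htop A + htop B) (A * B) = hc (htop A) A * hc (htop B) B"
proof -
  let ?t = "htop A + htop B"
  have "hc ?t (A * B) = (\<Sum>i\<le>?t. hc i A * hc (?t - i) B)" by (rule hc_mult)
  also have "\<dots> = hc (htop A) A * hc (?t - htop A) B + (\<Sum>i\<in>{..?t} - {htop A}. hc i A * hc (?t - i) B)"
    by (subst sum.remove[of _ "htop A"]) auto
  also have "(\<Sum>i\<in>{..?t} - {htop A}. hc i A * hc (?t - i) B) = 0"
  proof (rule sum.neutral, rule ballI)
    fix i assume i: "i \<in> {..?t} - {htop A}"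
    show "hc i A * hc (?t - i) B = 0"
    proof (cases "i < htop A")
      case True
      then have "\<not> (?t - i \<le> htop B)" by linarith
      then have "hc (?t - i) B = 0" using htop(2)[OF assms(2)] by blast
      then show ?thesis by simp
    next
      case False then have "\<not> i \<le> htop A" using i by auto
      then have "hc i A = 0" using htop(2)[OF assms(1)] by blast
      then show ?thesis by simp
    qed
  qed
  finally show ?thesis by simp
qed

lemma hc_mult_bot: assumes "A \<noteq> 0" "B \<noteq> 0"
  shows "hc (hbot A + hbot B) (A * B) = hc (hbot A) A * hc (hbot B) B"
proof -
  let ?t = "hbot A + hbot B"
  have "hc ?t (A * B) = (\<Sum>i\<le>?t. hc i A * hc (?t - i) B)" by (rule hc_mult)
  also have "\<dots> = hc (hbot A) A * hc (?t - hbot A) B + (\<Sum>i\<in>{..?t} - {hbot A}. hc i A * hc (?t - i) B)"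
    by (subst sum.remove[of _ "hbot A"]) auto
  also have "(\<Sum>i\<in>{..?t} - {hbot A}. hc i A * hc (?t - i) B) = 0"
  proof (rule sum.neutral, rule ballI)
    fix i assume i: "i \<in> {..?t} - {hbot A}"
    show "hc i A * hc (?t - i) B = 0"
    proof (cases "i < hbot A")
      case True
      then have "\<not> hbot A \<le> i" by linarith
      then have "hc i A = 0" using hbot(2)[OF assms(1)] by blast
      then show ?thesis by simp
    next
      case False then have "\<not> hbot B \<le> ?t - i" using i by auto
      then have "hc (?t - i) B = 0" using hbot(2)[OF assms(2)] by blast
      then show ?thesis by simp
    qed
  qed
  finally show ?thesis by simp
qed

lemma dvd_homog: assumes P: "whomog (int e) P" "P \<noteq> 0" and dv: "A dvd P"
  shows "\<exists>e'. whomog (int e') A"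
proof -
  obtain B where PAB: "P = A * B" using dv by (auto elim: dvdE)
  have A0: "A \<noteq> 0" and B0: "B \<noteq> 0" using P(2) PAB by auto
  have Ph: "\<And>d. hc d P \<noteq> 0 \<Longrightarrow> d = e" using P(1) whomog_hc by blast
  have "hc (htop A + htop B) P \<noteq> 0"
    unfolding PAB hc_mult_top[OF A0 B0] using htop(1)[OF A0] htop(1)[OF B0] by simp
  then have t: "htop A + htop B = e" using Ph by blast
  have "hc (hbot A + hbot B) P \<noteq> 0"
    unfolding PAB hc_mult_bot[OF A0 B0] using hbot(1)[OF A0] hbot(1)[OF B0] by simp
  then have b: "hbot A + hbot B = e" using Ph by blast
  have "hbot A \<le> htop A" "hbot B \<le> htop B"
    using hbot(2)[OF A0 htop(1)[OF A0]] hbot(2)[OF B0 htop(1)[OF B0]] by auto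
  with t b have eq: "hbot A = htop A" by linarith
  have "\<forall>d. d \<noteq> htop A \<longrightarrow> hc d A = 0"
  proof (intro allI impI)
    fix d assume "d \<noteq> htop A"
    show "hc d A = 0"
    proof (rule ccontr)
      assume "hc d A \<noteq> 0"
      then have "d \<le> htop A" "hbot A \<le> d" using htop(2)[OF A0] hbot(2)[OF A0] by auto
      with eq \<open>d \<noteq> htop A\<close> show False by linarith
    qed
  qed
  then show ?thesis using whomog_hc by blast
qed


lemma prime_X: "prime_elem ([:0,1:] :: 'a::idom_divide poly)"
proof (rule prime_elemI)
  show "[:0,1:] \<noteq> (0 :: 'a poly)" by simp
  show "\<not> is_unit ([:0,1:] :: 'a poly)"
  proof
    assume "is_unit ([:0,1:] :: 'a poly)"
    then obtain c where "[:0,1:] = ([:c:] :: 'a poly)" by (auto simp: is_unit_poly_iff)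
    then show False by (simp add: pCons_eq_iff)
  qed
  fix a b :: "'a poly" assume "[:0,1:] dvd a * b"
  then have "poly (a * b) 0 = 0" using dvd_iff_poly_eq_0[of 0 "a*b"] by simp
  then have "poly a 0 = 0 \<or> poly b 0 = 0" by simp
  then show "[:0,1:] dvd a \<or> [:0,1:] dvd b" using dvd_iff_poly_eq_0[of 0 a] dvd_iff_poly_eq_0[of 0 b] by auto
qed

lemma X_dvd_iff: "([:0,1:] :: 'a::idom_divide poly) dvd P \<longleftrightarrow> poly P 0 = 0"
  using dvd_iff_poly_eq_0[of 0 P] by simp

lemma X_factor: assumes "prime_elem (pp :: 'a::idom_divide poly)" "pp dvd [:0,1:]" "pp dvd X"
  shows "poly X 0 = 0"
proof -
  obtain s where s: "[:0,1:] = pp * s" using assms(2) by (auto elim: dvdE)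
  have "irreducible ([:0,1:] :: 'a poly)" by (rule prime_elem_imp_irreducible[OF prime_X])
  from irreducibleD[OF this s] have "is_unit s" using prime_elem_not_unit[OF assms(1)] by blast
  then have "[:0,1:] dvd pp" using s by (metis dvd_mult_unit_iff dvd_refl)
  then have "[:0,1:] dvd X" using assms(3) by (rule dvd_trans)
  then show ?thesis by (simp add: X_dvd_iff)
qed

lemma no_common_prime_coprime:
  fixes a b :: "'a::factorial_ring_gcd"
  assumes "\<And>pp. prime_elem pp \<Longrightarrow> pp dvd a \<Longrightarrow> pp dvd b \<Longrightarrow> False" "a \<noteq> 0"
  shows "coprime a b"
proof -
  have g: "gcd a b \<noteq> 0" using assms(2) by simp
  show ?thesis
  proof (rule ccontr)
    assume "\<not> coprime a b"
    then have "\<not> is_unit (gcd a b)" using is_unit_gcd by blast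
    then obtain pp where "pp dvd gcd a b" "prime pp" using prime_divisor_exists[OF g] by blast
    then show False using assms(1)[of pp] by auto
  qed
qed

definition pi :: "W \<Rightarrow> bit poly poly" where "pi P = poly P 0"
lemma pi_add[simp]: "pi (P + R) = pi P + pi R" by (simp add: pi_def)
lemma pi_mult[simp]: "pi (P * R) = pi P * pi R" by (simp add: pi_def)
lemma pi_1[simp]: "pi 1 = 1" by (simp add: pi_def)
lemma pi_0[simp]: "pi 0 = 0" by (simp add: pi_def)
lemma pi_pow[simp]: "pi (P ^ k) = pi P ^ k" by (simp add: pi_def)
lemma pi_dvd: "A dvd B \<Longrightarrow> pi A dvd pi B" by (auto elim!: dvdE)
lemma w3_X: "w3 = [:0,1:]" by (simp add: w3_def monom_Suc monom_0 one_pCons)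
lemma pi_w3[simp]: "pi w3 = 0" by (simp add: pi_def w3_X)
lemma w3_dvd_iff: "w3 dvd P \<longleftrightarrow> pi P = 0" by (simp add: w3_X X_dvd_iff pi_def)
lemma pi_w2: "pi w2 = [:0,1:]" by (simp add: pi_def w2_def monom_Suc monom_0 one_pCons)
lemma pi_w1: "pi w1 = [:[:0,1:]:]" by (simp add: pi_def w1_def monom_Suc monom_0 one_pCons)
lemma pi_const[simp]: "pi [:s:] = s" by (simp add: pi_def)
lemma pi_smult[simp]: "pi (smult s P) = s * pi P" by (simp add: pi_def)
lemma pi_diff[simp]: "pi (P - R) = pi P - pi R" unfolding pi_def by (rule poly_diff)
lemma pi_uminus[simp]: "pi (- P) = - pi P" unfolding pi_def by (rule poly_minus)

definition Qb :: "nat \<Rightarrow> bit poly poly" where "Qb m = pi (Q m)"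
lemma Qb_rec: "Qb (Suc (Suc m)) = pi w1 * Qb (Suc m) + pi w2 * Qb m"
  by (cases m) (simp_all add: Qb_def)
lemma Qb_01: "Qb 0 = 1" "Qb (Suc 0) = pi w1" by (simp_all add: Qb_def)

lemma Qb_at0: "poly (Qb m) 0 = [:0,1:] ^ m \<and> poly (Qb (Suc m)) 0 = [:0,1:] ^ Suc m"
proof (induction m)
  case 0 then show ?case by (simp add: Qb_01 pi_w1)
next
  case (Suc m) then show ?case by (simp add: Qb_rec pi_w1 pi_w2)
qed

lemma Qb_at0_nz: "poly (Qb m) 0 \<noteq> 0" using Qb_at0[of m] by simp
lemma Q_nz: "Q m \<noteq> 0" using Qb_at0_nz[of m] by (auto simp: Qb_def)

lemma Qb_aux: "prime_elem pp \<Longrightarrow> pp dvd Qb m \<Longrightarrow> pp dvd Qb (Suc m) \<Longrightarrow> False"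
proof (induction m)
  case 0 then show ?case using prime_elem_not_unit by (auto simp: Qb_01)
next
  case (Suc m)
  have "pp dvd pi w1 * Qb (Suc m) + pi w2 * Qb m" using Suc.prems(3) by (simp add: Qb_rec)
  then have "pp dvd pi w2 * Qb m" using Suc.prems(2) by (simp add: dvd_add_right_iff)
  then have "pp dvd pi w2 \<or> pp dvd Qb m" using Suc.prems(1) prime_elem_dvd_mult_iff by blast
  then show False
  proof
    assume "pp dvd pi w2"
    then have "poly (Qb (Suc m)) 0 = 0" using X_factor[OF Suc.prems(1)] Suc.prems(2) by (simp add: pi_w2)
    then show False using Qb_at0_nz by blast
  qed (use Suc in blast)
qed

lemma homog_unit: assumes "whomog (int e) P" "is_unit (pi P)" shows "P = 1"
proof -
  obtain c where c: "pi P = [:c:]" "is_unit c" using assms(2) by (auto simp: is_unit_poly_iff)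
  obtain c' where c': "c = [:c':]" "is_unit c'" using c(2) by (auto simp: is_unit_poly_iff)
  have "c' \<noteq> 0" using c'(2) by auto
  then have c1: "c' = 1" by (simp add: bit_not_zero_iff)
  have P000: "coeff3 P 0 0 0 = 1" using c c' c1 by (simp add: coeff3_def pi_def poly_0_coeff_0)
  have "coeff3 P 0 0 0 \<noteq> 0" using P000 by simp
  then have "int (0 + 2*0 + 3*0) = int e" using assms(1) unfolding whomog_def by blast
  then have e0: "e = 0" by simp
  show ?thesis
  proof (rule W_eqI)
    fix a b c
    show "coeff3 P a b c = coeff3 1 a b c"
    proof (cases "a = 0 \<and> b = 0 \<and> c = 0")
      case True then show ?thesis using P000 by (simp add: coeff3_1)
    next
      case False
      have "coeff3 P a b c = 0"
      proof (rule ccontr)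
        assume "coeff3 P a b c \<noteq> 0"
        then have "int (a + 2*b + 3*c) = int e" using assms(1) unfolding whomog_def by blast
        then show False using e0 False by simp
      qed
      then show ?thesis using False by (simp add: coeff3_1)
    qed
  qed
qed

lemma Q_aux: assumes "prime_elem pp" "pp dvd Q m" "pp dvd Q (Suc m)" shows False
proof -
  obtain e where e: "whomog (int e) pp" using dvd_homog[OF hQ Q_nz assms(2)] by blast
  have d1: "pi pp dvd Qb m" "pi pp dvd Qb (Suc m)" using pi_dvd assms(2,3) by (auto simp: Qb_def)
  consider "pi pp = 0" | "is_unit (pi pp)" | "pi pp \<noteq> 0" "\<not> is_unit (pi pp)" by blast
  then show False
  proof cases
    case 1
    then have "w3 dvd pp" by (simp add: w3_dvd_iff)
    then have "w3 dvd Q m" using assms(2) by (rule dvd_trans)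
    then show False using Qb_at0_nz[of m] by (simp add: w3_dvd_iff Qb_def)
  next
    case 2
    then have "pp = 1" by (rule homog_unit[OF e])
    then show False using assms(1) prime_elem_not_unit by auto
  next
    case 3
    then obtain pp' where "pp' dvd pi pp" "prime pp'" using prime_divisor_exists by blast
    then show False using Qb_aux[of pp' m] d1 by (meson dvd_trans prime_imp_prime_elem)
  qed
qed

lemma Q_coprime: "coprime (Q m) (Q (Suc m))"
  by (rule no_common_prime_coprime[OF _ Q_nz]) (use Q_aux in blast)

lemma pi_q2: "pi (q (Suc (Suc m))) = pi w2 * pi (q m)"
  by (cases m) (simp_all)
lemma pi_q_even: "pi (q (2*k)) = [:0,1:] ^ k"
  by (induction k) (simp_all add: pi_q2[simplified] pi_w2 numeral_2_eq_2 mult_Suc_right)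

lemma q3_aux: "prime_elem pp \<Longrightarrow> pp dvd q k \<Longrightarrow> pp dvd q (Suc k) \<Longrightarrow> pp dvd q (Suc (Suc k)) \<Longrightarrow> False"
proof (induction k)
  case 0 then show ?case using prime_elem_not_unit by auto
next
  case (Suc k)
  have "q (Suc (Suc (Suc k))) = w2 * q (Suc k) + w3 * q k" by simp
  then have "pp dvd w2 * q (Suc k) + w3 * q k" using Suc.prems(4) by simp
  then have "pp dvd w3 * q k" using Suc.prems(2) by (simp add: dvd_add_right_iff)
  then have "pp dvd w3 \<or> pp dvd q k" using Suc.prems(1) prime_elem_dvd_mult_iff by blast
  then show False
  proof
    assume h: "pp dvd w3"
    have a: "pi (q (Suc k)) = 0" "pi (q (Suc (Suc k))) = 0"
      using X_factor[OF Suc.prems(1) h[unfolded w3_X]] Suc.prems(2,3) by (simp_all add: pi_def)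
    have "\<exists>j. Suc k = 2*j \<or> Suc (Suc k) = 2*j"
    proof (cases "even (Suc k)")
      case True then show ?thesis by (auto simp: dvd_def)
    next
      case False then have "even (Suc (Suc k))" by simp
      then show ?thesis by (auto simp: dvd_def)
    qed
    then obtain j where "Suc k = 2*j \<or> Suc (Suc k) = 2*j" by blast
    then show False using a pi_q_even[of j] by auto
  qed (use Suc in blast)
qed

lemma q_nz_even: "q (2*k) \<noteq> 0"
proof
  assume "q (2*k) = 0"
  then have "pi (q (2*k)) = 0" by simp
  then show False using pi_q_even[of k] by simp
qed

lemma q_gcd3: "is_unit (gcd (q k) (gcd (q (Suc k)) (q (Suc (Suc k)))))"
proof (rule ccontr)
  let ?g = "gcd (q k) (gcd (q (Suc k)) (q (Suc (Suc k))))"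
  assume nu: "\<not> is_unit ?g"
  have "?g \<noteq> 0"
  proof
    assume "?g = 0"
    then have "q k = 0" "q (Suc k) = 0" by auto
    moreover have "\<exists>j. k = 2*j \<or> Suc k = 2*j"
    proof (cases "even k")
      case True then show ?thesis by (auto simp: dvd_def)
    next
      case False then have "even (Suc k)" by simp
      then show ?thesis by (auto simp: dvd_def)
    qed
    ultimately show False using q_nz_even by metis
  qed
  then obtain pp where "pp dvd ?g" "prime pp" using prime_divisor_exists nu by blast
  then show False using q3_aux[of pp k] by (meson dvd_gcdD1 dvd_gcdD2 dvd_trans prime_imp_prime_elem)
qed


section \<open>regularity\<close>
declare uminus_W[simp del] diff_W[simp del]

lemma Qb_coprime: "coprime (Qb m) (Qb (Suc m))"
proof (rule no_common_prime_coprime)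
  show "Qb m \<noteq> 0" using Qb_at0_nz[of m] by auto
qed (use Qb_aux in blast)

lemma w3_nzd: assumes "w3 * f = x * Q m + y * Q (Suc m)"
  shows "\<exists>x' y'. f = x' * Q m + y' * Q (Suc m)"
proof -
  have "pi (w3 * f) = pi x * Qb m + pi y * Qb (Suc m)" unfolding assms by (simp add: Qb_def)
  then have e: "pi x * Qb m = - (pi y * Qb (Suc m))" by (simp add: eq_neg_iff_add_eq_0)
  then have "Qb (Suc m) dvd pi x * Qb m" by simp
  then have "Qb (Suc m) dvd pi x"
    using coprime_dvd_mult_left_iff[of "Qb (Suc m)" "Qb m"] Qb_coprime[of m] by (simp add: coprime_commute)
  then obtain s where s: "pi x = Qb (Suc m) * s" by (auto elim: dvdE)
  have "Qb (Suc m) * pi y = Qb (Suc m) * (- (s * Qb m))" using e s by (simp add: algebra_simps)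
  moreover have "Qb (Suc m) \<noteq> 0" using Qb_at0_nz[of "Suc m"] by auto
  ultimately have sy: "pi y = - (s * Qb m)" using mult_left_cancel by blast
  have "w3 dvd (x - [:s:] * Q (Suc m))" unfolding w3_dvd_iff using s by (simp add: Qb_def algebra_simps)
  then obtain x' where x': "x - [:s:] * Q (Suc m) = w3 * x'" by (rule dvdE)
  have "w3 dvd (y + [:s:] * Q m)" unfolding w3_dvd_iff using sy by (simp add: Qb_def algebra_simps)
  then obtain y' where y': "y + [:s:] * Q m = w3 * y'" by (rule dvdE)
  have xe: "x = [:s:] * Q (Suc m) + w3 * x'" using x' by (metis diff_add_cancel add.commute)
  have ye: "y = w3 * y' - [:s:] * Q m" using y' by (metis add_diff_cancel_right')
  have "x * Q m + y * Q (Suc m) = w3 * (x' * Q m + y' * Q (Suc m))" unfolding xe ye by algebra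
  then have "w3 * f = w3 * (x' * Q m + y' * Q (Suc m))" unfolding assms .
  then show ?thesis using w3_nz by auto
qed

lemma Q_coprime': "coprime (Q (Suc m)) (Q m)" using Q_coprime coprime_commute by blast

lemma C_reg: "f * Q (m+2) = \<alpha> * Q m + \<beta> * Q (m+1) \<Longrightarrow> \<exists>x y. f = x * Q m + y * Q (m+1)"
proof (induction m arbitrary: f \<alpha> \<beta>)
  case 0 then show ?case by (intro exI[of _ f] exI[of _ 0]) simp
next
  case (Suc m)
  have Qr: "Q (m+3) = w1 * Q (m+2) + w2 * Q (m+1) + w3 * Q m" by (rule Q_simps(4))
  have p1: "f * Q (Suc (Suc (Suc m))) = \<alpha> * Q (Suc m) + \<beta> * Q (Suc (Suc m))"
    using Suc.prems by (simp add: numeral_2_eq_2)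
  have Qr': "Q (Suc (Suc (Suc m))) = w1 * Q (Suc (Suc m)) + w2 * Q (Suc m) + w3 * Q m" by simp
  have "w3 * (f * Q m) = (\<alpha> - f * w2) * Q (Suc m) + (\<beta> - f * w1) * Q (Suc (Suc m))"
    using p1 unfolding Qr' by algebra
  then obtain x y where xy: "f * Q m = x * Q (Suc m) + y * Q (Suc (Suc m))"
    using w3_nzd[of "f * Q m" _ "Suc m"] by blast
  have "y * Q (m+2) = f * Q m + (- x) * Q (m+1)" using xy by (simp add: algebra_simps)
  then obtain x' y' where y: "y = x' * Q m + y' * Q (m+1)" using Suc.IH by blast
  have "(f - x' * Q (m+2)) * Q m = (x + y' * Q (m+2)) * Q (Suc m)"
    using xy y by (simp add: algebra_simps)
  then have "Q (Suc m) dvd (f - x' * Q (m+2)) * Q m" by (metis dvd_triv_right)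
  then have "Q (Suc m) dvd f - x' * Q (m+2)"
    using coprime_dvd_mult_left_iff[OF Q_coprime'[of m]] by blast
  then obtain z where "f - x' * Q (m+2) = Q (Suc m) * z" by (auto elim: dvdE)
  then have "f = z * Q (Suc m) + x' * Q (Suc m + 1)" by (simp add: algebra_simps)
  then show ?case by blast
qed

lemma koszul: assumes "t1 * Q m + t2 * Q (m+1) + t3 * Q (m+2) = 0"
  shows "\<exists>c1 c2 c3. t1 = c2 * Q (m+2) - c3 * Q (m+1) \<and> t2 = c3 * Q m - c1 * Q (m+2)
          \<and> t3 = c1 * Q (m+1) - c2 * Q m"
proof -
  have a: "t1 * Q m + t2 * Q (Suc m) + t3 * Q (Suc (Suc m)) = 0" using assms by simp
  have "t3 * Q (m+2) = (- t1) * Q m + (- t2) * Q (m+1)" using a by (simp add: algebra_simps eq_neg_iff_add_eq_0)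
  then obtain x y where xy: "t3 = x * Q m + y * Q (m+1)" using C_reg by blast
  have xy': "t3 = x * Q m + y * Q (Suc m)" using xy by simp
  have "(t1 + x * Q (Suc (Suc m))) * Q m = - ((t2 + y * Q (Suc (Suc m))) * Q (Suc m))"
    using a xy' by algebra
  then have "Q (Suc m) dvd (t1 + x * Q (Suc (Suc m))) * Q m" by (metis dvd_minus_iff dvd_triv_right)
  then have "Q (Suc m) dvd t1 + x * Q (Suc (Suc m))"
    using coprime_dvd_mult_left_iff[OF Q_coprime'[of m]] by blast
  then obtain z where z: "t1 + x * Q (Suc (Suc m)) = Q (Suc m) * z" by (auto elim: dvdE)
  have "Q (Suc m) * (t2 + y * Q (Suc (Suc m))) = Q (Suc m) * (- (z * Q m))"
    using a xy' z by algebra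
  then have t2: "t2 + y * Q (Suc (Suc m)) = - (z * Q m)" using Q_nz mult_left_cancel by blast
  have "t1 = (- x) * Q (Suc (Suc m)) - (- z) * Q (Suc m) \<and> t2 = (- z) * Q m - y * Q (Suc (Suc m))
          \<and> t3 = y * Q (Suc m) - (- x) * Q m"
    using xy' z t2 by (simp add: algebra_simps eq_neg_iff_add_eq_0)
  then show ?thesis by (intro exI[of _ y] exI[of _ "- x"] exI[of _ "- z"]) simp
qed

section \<open>Hilbert-Burch\<close>

lemma dvd_from_gcd3:
  fixes X Y D1 D2 D3 :: W
  assumes "is_unit (gcd D1 (gcd D2 D3))" "X dvd D1 * Y" "X dvd D2 * Y" "X dvd D3 * Y"
  shows "X dvd Y"
proof -
  have "X dvd gcd (D2 * Y) (D3 * Y)" using assms(3,4) by simp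
  then have "X dvd gcd D3 D2 * Y" by (simp add: gcd_mult_right)
  then have "X dvd gcd (D1 * Y) (gcd D3 D2 * Y)" using assms(2) by simp
  then have "X dvd gcd (gcd D3 D2) D1 * Y" by (simp add: gcd_mult_right)
  moreover have "gcd (gcd D3 D2) D1 = gcd D1 (gcd D2 D3)" by (simp add: ac_simps)
  ultimately have "X dvd gcd D1 (gcd D2 D3) * Y" by simp
  then show ?thesis using assms(1) by (simp add: dvd_mult_unit_iff')
qed

lemma cancel3:
  fixes D A B s1 s2 s3 u1 u2 u3 v1 v2 v3 :: W
  assumes "D \<noteq> 0" "D dvd A" "D dvd B" "D*s1 = A*u1 + B*v1" "D*s2 = A*u2 + B*v2" "D*s3 = A*u3 + B*v3"
  shows "\<exists>a d. s1 = a*u1 + d*v1 \<and> s2 = a*u2 + d*v2 \<and> s3 = a*u3 + d*v3"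
proof -
  obtain a d where "A = D * a" "B = D * d" using assms(2,3) by (auto elim!: dvdE)
  then have "D*s1 = D*(a*u1 + d*v1)" "D*s2 = D*(a*u2 + d*v2)" "D*s3 = D*(a*u3 + d*v3)"
    using assms(4-6) by (simp_all add: algebra_simps)
  then show ?thesis using assms(1) by auto
qed

lemma HB:
  fixes u1 u2 u3 v1 v2 v3 s1 s2 s3 :: W
  assumes syz: "s1*(u2*v3 - u3*v2) + s2*(u3*v1 - u1*v3) + s3*(u1*v2 - u2*v1) = 0"
    and gu: "is_unit (gcd (u2*v3 - u3*v2) (gcd (u3*v1 - u1*v3) (u1*v2 - u2*v1)))"
    and nz: "u2*v3 - u3*v2 \<noteq> 0 \<or> u3*v1 - u1*v3 \<noteq> 0 \<or> u1*v2 - u2*v1 \<noteq> 0"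
  shows "\<exists>a d. s1 = a*u1 + d*v1 \<and> s2 = a*u2 + d*v2 \<and> s3 = a*u3 + d*v3"
proof -
  define D1 D2 D3 where "D1 = u2*v3 - u3*v2" and "D2 = u3*v1 - u1*v3" and "D3 = u1*v2 - u2*v1"
  define a1 a2 a3 where "a1 = s2*v3 - s3*v2" and "a2 = s3*v1 - s1*v3" and "a3 = s1*v2 - s2*v1"
  define d1 d2 d3 where "d1 = u2*s3 - u3*s2" and "d2 = u3*s1 - u1*s3" and "d3 = u1*s2 - u2*s1"
  have syz': "s1*D1 + s2*D2 + s3*D3 = 0" using syz by (simp add: D1_def D2_def D3_def)
  have gu': "is_unit (gcd D1 (gcd D2 D3))" using gu by (simp add: D1_def D2_def D3_def)
  have id11: "D1*s1 = a1*u1 + d1*v1"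
    using syz' unfolding D1_def D2_def D3_def a1_def d1_def by algebra
  have id12: "D1*s2 = a1*u2 + d1*v2"
    unfolding D1_def D2_def D3_def a1_def d1_def by algebra
  have id13: "D1*s3 = a1*u3 + d1*v3"
    unfolding D1_def D2_def D3_def a1_def d1_def by algebra
  have id21: "D2*s1 = a2*u1 + d2*v1"
    unfolding D1_def D2_def D3_def a2_def d2_def by algebra
  have id22: "D2*s2 = a2*u2 + d2*v2"
    using syz' unfolding D1_def D2_def D3_def a2_def d2_def by algebra
  have id23: "D2*s3 = a2*u3 + d2*v3"
    unfolding D1_def D2_def D3_def a2_def d2_def by algebra
  have id31: "D3*s1 = a3*u1 + d3*v1"
    unfolding D1_def D2_def D3_def a3_def d3_def by algebra
  have id32: "D3*s2 = a3*u2 + d3*v2"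
    unfolding D1_def D2_def D3_def a3_def d3_def by algebra
  have id33: "D3*s3 = a3*u3 + d3*v3"
    using syz' unfolding D1_def D2_def D3_def a3_def d3_def by algebra
  note id1 = id11 id12 id13
  note id2 = id21 id22 id23
  note id3 = id31 id32 id33
  have ca12: "D1*a2 = D2*a1"
    using syz' unfolding D1_def D2_def D3_def a1_def a2_def by algebra
  have cd12: "D1*d2 = D2*d1"
    using syz' unfolding D1_def D2_def D3_def d1_def d2_def by algebra
  have ca13: "D1*a3 = D3*a1"
    using syz' unfolding D1_def D2_def D3_def a1_def a3_def by algebra
  have cd13: "D1*d3 = D3*d1"
    using syz' unfolding D1_def D2_def D3_def d1_def d3_def by algebra
  have ca23: "D2*a3 = D3*a2"
    using syz' unfolding D1_def D2_def D3_def a2_def a3_def by algebra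
  have cd23: "D2*d3 = D3*d2"
    using syz' unfolding D1_def D2_def D3_def d2_def d3_def by algebra
  note ca = ca12 ca13 ca23
  note cd = cd12 cd13 cd23
  have nz': "D1 \<noteq> 0 \<or> D2 \<noteq> 0 \<or> D3 \<noteq> 0" using nz by (simp add: D1_def D2_def D3_def)
  then consider "D1 \<noteq> 0" | "D2 \<noteq> 0" | "D3 \<noteq> 0" by blast
  then show ?thesis
  proof cases
    case 1
    have "D1 dvd a1" by (rule dvd_from_gcd3[OF gu']) (metis ca12 ca13 ca23 dvd_triv_left)+
    moreover have "D1 dvd d1" by (rule dvd_from_gcd3[OF gu']) (metis cd12 cd13 cd23 dvd_triv_left)+
    ultimately show ?thesis using cancel3[OF 1 _ _ id1] by blast
  next
    case 2
    have "D2 dvd a2" by (rule dvd_from_gcd3[OF gu']) (metis ca12 ca13 ca23 dvd_triv_left)+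
    moreover have "D2 dvd d2" by (rule dvd_from_gcd3[OF gu']) (metis cd12 cd13 cd23 dvd_triv_left)+
    ultimately show ?thesis using cancel3[OF 2 _ _ id2] by blast
  next
    case 3
    have "D3 dvd a3" by (rule dvd_from_gcd3[OF gu']) (metis ca12 ca13 ca23 dvd_triv_left)+
    moreover have "D3 dvd d3" by (rule dvd_from_gcd3[OF gu']) (metis cd12 cd13 cd23 dvd_triv_left)+
    ultimately show ?thesis using cancel3[OF 3 _ _ id3] by blast
  qed
qed


lemma chA:
  fixes u1 u2 u3 v1 v2 v3 P0 P1 P2 A0 A1 A2 a d :: W
  assumes "A0 = (u2*v3 + u3*v2) + w1*P0" "A1 = (u1*v3 + u3*v1) + w1*P1" "A2 = (u1*v2 + u2*v1) + w1*P2"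
  shows "w1*(u3*P2 + u2*P1 + u1*P0) = u1*A0 + u2*A1 + u3*A2"
    "w1*(v3*P2 + v2*P1 + v1*P0) = v1*A0 + v2*A1 + v3*A2"
    "v3*(u3*P2 + u2*P1 + u1*P0) + u3*(v3*P2 + v2*P1 + v1*P0) = P1*A0 + P0*A1"
    "v2*(u3*P2 + u2*P1 + u1*P0) + u2*(v3*P2 + v2*P1 + v1*P0) = P2*A0 + P0*A2"
    "v1*(u3*P2 + u2*P1 + u1*P0) + u1*(v3*P2 + v2*P1 + v1*P0) = P2*A1 + P1*A2"
    "(a*u1+d*v1)*A0 + (a*u2+d*v2)*A1 + (a*u3+d*v3)*A2 = w1*(a*(u3*P2 + u2*P1 + u1*P0) + d*(v3*P2 + v2*P1 + v1*P0))"
proof -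
  have wA: "w1*(u3*P2 + u2*P1 + u1*P0) = u1*A0 + u2*A1 + u3*A2"
    unfolding assms by (rule char2I[where z = "(- (u1*u2*v3) + - (u1*u3*v2) + - (u2*u3*v1))"]) algebra
  have wD: "w1*(v3*P2 + v2*P1 + v1*P0) = v1*A0 + v2*A1 + v3*A2"
    unfolding assms by (rule char2I[where z = "(- (u1*v2*v3) + - (u2*v1*v3) + - (u3*v1*v2))"]) algebra
  have r3: "v3*(u3*P2 + u2*P1 + u1*P0) + u3*(v3*P2 + v2*P1 + v1*P0) = P1*A0 + P0*A1"
    unfolding assms by (rule char2I[where z = "(- (P0*P1*w1) + P2*u3*v3)"]) algebra
  have r2: "v2*(u3*P2 + u2*P1 + u1*P0) + u2*(v3*P2 + v2*P1 + v1*P0) = P2*A0 + P0*A2"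
    unfolding assms by (rule char2I[where z = "(- (P0*P2*w1) + P1*u2*v2)"]) algebra
  have r1: "v1*(u3*P2 + u2*P1 + u1*P0) + u1*(v3*P2 + v2*P1 + v1*P0) = P2*A1 + P1*A2"
    unfolding assms by (rule char2I[where z = "(P0*u1*v1 + - (P1*P2*w1))"]) algebra
  have sg: "(a*u1+d*v1)*A0 + (a*u2+d*v2)*A1 + (a*u3+d*v3)*A2 = w1*(a*(u3*P2 + u2*P1 + u1*P0) + d*(v3*P2 + v2*P1 + v1*P0))"
    unfolding assms by (rule char2I[where z = "(a*u1*u2*v3 + a*u1*u3*v2 + a*u2*u3*v1 + d*u1*v2*v3 + d*u2*v1*v3 + d*u3*v1*v2)"]) algebra

  show "w1*(u3*P2 + u2*P1 + u1*P0) = u1*A0 + u2*A1 + u3*A2"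
    "w1*(v3*P2 + v2*P1 + v1*P0) = v1*A0 + v2*A1 + v3*A2"
    "v3*(u3*P2 + u2*P1 + u1*P0) + u3*(v3*P2 + v2*P1 + v1*P0) = P1*A0 + P0*A1"
    "v2*(u3*P2 + u2*P1 + u1*P0) + u2*(v3*P2 + v2*P1 + v1*P0) = P2*A0 + P0*A2"
    "v1*(u3*P2 + u2*P1 + u1*P0) + u1*(v3*P2 + v2*P1 + v1*P0) = P2*A1 + P1*A2"
    "(a*u1+d*v1)*A0 + (a*u2+d*v2)*A1 + (a*u3+d*v3)*A2 = w1*(a*(u3*P2 + u2*P1 + u1*P0) + d*(v3*P2 + v2*P1 + v1*P0))"
    using wA wD r3 r2 r1 sg by auto
qed

lemma chSyz:
  fixes u1 u2 u3 v1 v2 v3 :: W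
  shows "u1*(u2*v3 + u3*v2) + u2*(u1*v3 + u3*v1) + u3*(u1*v2 + u2*v1) = 0"
    "v1*(u2*v3 + u3*v2) + v2*(u1*v3 + u3*v1) + v3*(u1*v2 + u2*v1) = 0"
  by (rule char2I[where z = "u1*u2*v3 + u1*u3*v2 + u2*u3*v1"], algebra)
     (rule char2I[where z = "v1*u2*v3 + v1*u3*v2 + v2*u1*v3"], algebra)

lemma chK:
  fixes u1 u2 u3 v1 v2 v3 a d c1 c2 c3 :: W
  assumes h1: "a*u1 + d*v1 = c2*(u1*v2 + u2*v1) + c3*(u1*v3 + u3*v1)"
    and h2: "a*u2 + d*v2 = c3*(u2*v3 + u3*v2) + c1*(u1*v2 + u2*v1)"
    and h3: "a*u3 + d*v3 = c1*(u1*v3 + u3*v1) + c2*(u2*v3 + u3*v2)"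
    and nz: "u2*v3 + u3*v2 \<noteq> 0 \<or> u1*v3 + u3*v1 \<noteq> 0 \<or> u1*v2 + u2*v1 \<noteq> 0"
  shows "a = c1*v1 + c2*v2 + c3*v3" "d = c1*u1 + c2*u2 + c3*u3"
proof -
  define X where "X = a + (c1*v1 + c2*v2 + c3*v3)"
  define Y where "Y = d + (c1*u1 + c2*u2 + c3*u3)"
  have e1: "X*u1 + Y*v1 = 0"
  proof (rule char2I[where z = "(c1*u1*v1 + c2*u1*v2 + c2*u2*v1 + c3*u1*v3 + c3*u3*v1)"])
    show "X*u1 + Y*v1 = 0 + 2 * (c1*u1*v1 + c2*u1*v2 + c2*u2*v1 + c3*u1*v3 + c3*u3*v1)" using h1 unfolding X_def Y_def by algebra
  qed
  have e2: "X*u2 + Y*v2 = 0"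
  proof (rule char2I[where z = "(c1*u1*v2 + c1*u2*v1 + c2*u2*v2 + c3*u2*v3 + c3*u3*v2)"])
    show "X*u2 + Y*v2 = 0 + 2 * (c1*u1*v2 + c1*u2*v1 + c2*u2*v2 + c3*u2*v3 + c3*u3*v2)" using h2 unfolding X_def Y_def by algebra
  qed
  have e3: "X*u3 + Y*v3 = 0"
  proof (rule char2I[where z = "(c1*u1*v3 + c1*u3*v1 + c2*u2*v3 + c2*u3*v2 + c3*u3*v3)"])
    show "X*u3 + Y*v3 = 0 + 2 * (c1*u1*v3 + c1*u3*v1 + c2*u2*v3 + c2*u3*v2 + c3*u3*v3)" using h3 unfolding X_def Y_def by algebra
  qed
  have XB0: "X*(u2*v3 + u3*v2) = 0"
  proof (rule char2I[where z = "(- (Y*v2*v3))"])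
    show "X*(u2*v3 + u3*v2) = 0 + 2 * (- (Y*v2*v3))" using e2 e3 by algebra
  qed
  have YB0: "Y*(u2*v3 + u3*v2) = 0"
  proof (rule char2I[where z = "(- (X*u2*u3))"])
    show "Y*(u2*v3 + u3*v2) = 0 + 2 * (- (X*u2*u3))" using e2 e3 by algebra
  qed
  have XB1: "X*(u1*v3 + u3*v1) = 0"
  proof (rule char2I[where z = "(- (Y*v1*v3))"])
    show "X*(u1*v3 + u3*v1) = 0 + 2 * (- (Y*v1*v3))" using e1 e3 by algebra
  qed
  have YB1: "Y*(u1*v3 + u3*v1) = 0"
  proof (rule char2I[where z = "(- (X*u1*u3))"])
    show "Y*(u1*v3 + u3*v1) = 0 + 2 * (- (X*u1*u3))" using e1 e3 by algebra
  qed
  have XB2: "X*(u1*v2 + u2*v1) = 0"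
  proof (rule char2I[where z = "(- (Y*v1*v2))"])
    show "X*(u1*v2 + u2*v1) = 0 + 2 * (- (Y*v1*v2))" using e1 e2 by algebra
  qed
  have YB2: "Y*(u1*v2 + u2*v1) = 0"
  proof (rule char2I[where z = "(- (X*u1*u2))"])
    show "Y*(u1*v2 + u2*v1) = 0 + 2 * (- (X*u1*u2))" using e1 e2 by algebra
  qed

  have "X = 0" using nz XB0 XB1 XB2 by auto
  moreover have "Y = 0" using nz YB0 YB1 YB2 by auto
  ultimately show "a = c1*v1 + c2*v2 + c3*v3" "d = c1*u1 + c2*u2 + c3*u3"
    unfolding X_def Y_def by (metis add_eq_0_iff uminus_W)+
qed


lemma Iid_iff: "x \<in> Iid n \<longleftrightarrow> (\<exists>a b c. x = a * Q (n-2) + b * Q (n-1) + c * Q n)"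
  by (auto simp: Iid_def)
lemma Iid_gen: "a * Q (n-2) + b * Q (n-1) + c * Q n \<in> Iid n"
  by (auto simp: Iid_def)
lemma Iid_add: "x \<in> Iid n \<Longrightarrow> y \<in> Iid n \<Longrightarrow> x + y \<in> Iid n"
proof -
  assume "x \<in> Iid n" "y \<in> Iid n"
  then obtain a b c a' b' c' where "x = a * Q (n-2) + b * Q (n-1) + c * Q n"
    "y = a' * Q (n-2) + b' * Q (n-1) + c' * Q n" by (auto simp: Iid_iff)
  then have "x + y = (a+a') * Q (n-2) + (b+b') * Q (n-1) + (c+c') * Q n" by (simp add: algebra_simps)
  then show ?thesis using Iid_gen by metis
qed
lemma Iid_mult: "x \<in> Iid n \<Longrightarrow> z * x \<in> Iid n"
proof -
  assume "x \<in> Iid n"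
  then obtain a b c where "x = a * Q (n-2) + b * Q (n-1) + c * Q n" by (auto simp: Iid_iff)
  then have "z * x = (z*a) * Q (n-2) + (z*b) * Q (n-1) + (z*c) * Q n" by (simp add: algebra_simps)
  then show ?thesis using Iid_gen by metis
qed
lemma q_eq_Q: "q k = Q k - w1 * p k" using Q_decomp[of k] by (simp add: p_eq)
lemma Jid_mult: assumes "y \<in> Jid n" "w1 * X \<in> Iid n" shows "y * X \<in> Iid n"
proof -
  obtain e0 e1 e2 where y: "y = e0 * q (n-2) + e1 * q (n-1) + e2 * q n" using assms(1) by (auto simp: Jid_def)
  have "y * X = ((e0 * X) * Q (n-2) + (e1 * X) * Q (n-1) + (e2 * X) * Q n)
     + (- (e0 * p (n-2) + e1 * p (n-1) + e2 * p n)) * (w1 * X)"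
    unfolding y q_eq_Q by (simp add: algebra_simps)
  then show ?thesis using Iid_add[OF Iid_gen Iid_mult[OF assms(2)]] by simp
qed
lemma zero_Jid: "0 \<in> Jid n"
  unfolding Jid_def by (rule CollectI, rule exI[of _ 0], rule exI[of _ 0], rule exI[of _ 0]) (simp add: inW2_0)
lemma ev0_idem[simp]: "ev0 (ev0 P) = ev0 P" by (rule ev0_id[OF inW2_ev0])
lemma ev0_uminus[simp]: "ev0 (- P) = - ev0 P" by (simp add: uminus_W)
lemma ev0_diff[simp]: "ev0 (P - R) = ev0 P - ev0 R" by (simp add: diff_W)
lemma inW2_ev0_iff: "inW2 P \<Longrightarrow> ev0 P = P" by (rule ev0_id)

theorem mainTheorem18:
  fixes n t :: nat
  assumes "2^(t-1) < n" and "n \<le> 2^t - 4"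
  defines "i \<equiv> 2^t - 3 - n" and "j \<equiv> n - 2^(t-1) + 1"
  defines "Dn \<equiv> q i * p n + q (i+1) * p (n-1) + w3 * q (i-1) * p (n-2)"
      and "An \<equiv> r (j-1) * p n + w3 * r (j-2) * p (n-1) + r j * p (n-2)"
  defines "degA \<equiv> 3 * int n - 2^t - 1" and "degD \<equiv> (2::int)^t - 4"
  shows "w1 * An \<in> Iid n \<and> w1 * Dn \<in> Iid n
    \<and> whomog degA An \<and> whomog degD Dn
    \<and> (\<forall>x. w1 * x \<in> Iid n \<longrightarrow>
          (\<exists>a d. inW2 a \<and> inW2 d \<and> x - (a * An + d * Dn) \<in> Iid n))
    \<and> (\<forall>a d. inW2 a \<and> inW2 d \<longrightarrow>
          (a * An + d * Dn \<in> Iid n \<longleftrightarrow>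
            (\<exists>c1 c2 c3. inW2 c1 \<and> inW2 c2 \<and> inW2 c3
               \<and> a - (c1 * q i + c2 * q (i+1) + c3 * (w3 * q (i-1))) \<in> Jid n
               \<and> d - (c1 * r (j-1) + c2 * (w3 * r (j-2)) + c3 * r j) \<in> Jid n)))
    \<and> whomog (2 * int n - 4 - degA) (q i) \<and> whomog (2 * int n - 4 - degD) (r (j-1))
    \<and> whomog (2 * int n - 3 - degA) (q (i+1)) \<and> whomog (2 * int n - 3 - degD) (w3 * r (j-2))
    \<and> whomog (2 * int n - 2 - degA) (w3 * q (i-1)) \<and> whomog (2 * int n - 2 - degD) (r j)"
proof -
  have t4: "t \<ge> 4"
  proof (rule ccontr)
    assume "\<not> 4 \<le> t" then have "t = 0 \<or> t = 1 \<or> t = 2 \<or> t = 3" by auto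
    then show False using assms(1,2) by auto
  qed
  define N where "N = (2::nat)^(t-1)"
  have tS: "t = Suc (t-1)" using t4 by simp
  have tN: "(2::nat)^t = 2 * N" unfolding N_def by (subst tS) simp
  have N8: "N \<ge> 8"
  proof -
    have "(2::nat)^3 \<le> 2^(t-1)" by (rule power_increasing) (use t4 in auto)
    then show ?thesis by (simp add: N_def)
  qed
  have nN: "N < n" "n \<le> 2*N - 4" using assms(1,2) tN by (simp_all add: N_def)
  have i_eq: "i = 2*N - 3 - n" using i_def tN by simp
  have j_eq: "j = n - N + 1" using j_def by (simp add: N_def)
  have i1: "i \<ge> 1" and j2: "j \<ge> 2" and jN: "j \<le> N - 3" using nN i_eq j_eq by auto
  have pI: "(2::int)^t = 2 * int N" using tN by (metis of_nat_numeral of_nat_power of_nat_mult)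
  have jI: "int j = int n - int N + 1" using j_eq nN by simp
  have iI: "int i = 2 * int N - 3 - int n" using i_eq nN by simp
  have n2: "n \<ge> 2" using nN N8 by simp
  have Nz: "qz (int N - 3) = 0"
  proof -
    have h: "int N = (2::int)^(t-1)" by (simp add: N_def)
    show ?thesis unfolding h by (rule qz_pow2) (use t4 in simp)
  qed
  have jr: "0 \<le> int j" "int j \<le> int N - 2" using jN N8 by auto
  note F = ident[OF Nz jr]
  have e: "int N - 3 + int j = int (n-2)" "int j - 2 = int (j-2)" "int N - 2 - int j = int i"
    "int j - 1 = int (j-1)" "int N - 1 - int j = int (i+1)" "int N - 2 + int j = int (n-1)"
    "int N - 3 - int j = int (i-1)" "int N - 1 + int j = int n"
    using jI iI i1 j2 n2 by simp_all
  have F1: "q (n-2) = w3 * r (j-2) * q i + r (j-1) * q (i+1)" using F(1) unfolding e qz_nat rz_nat .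
  have F2: "q (n-1) = r j * q i + w3 * r (j-1) * q (i-1)" using F(2) unfolding e qz_nat rz_nat .
  have F3: "q n = r j * q (i+1) + w3^2 * r (j-2) * q (i-1)" using F(3) unfolding e qz_nat rz_nat .
  define u1 where "u1 = r j"
  define u2 where "u2 = w3 * r (j-2)"
  define u3 where "u3 = r (j-1)"
  define v1 where "v1 = w3 * q (i-1)"
  define v2 where "v2 = q (i+1)"
  define v3 where "v3 = q i"
  have hB0: "q (n-2) = u2*v3 + u3*v2" using F1 unfolding u2_def u3_def v2_def v3_def .
  have hB1: "q (n-1) = u1*v3 + u3*v1" using F2 unfolding u1_def u3_def v1_def v3_def by algebra
  have hB2: "q n = u1*v2 + u2*v1" using F3 unfolding u1_def u2_def v1_def v2_def by algebra
  have hA0: "Q (n-2) = (u2*v3 + u3*v2) + w1 * p (n-2)" using Q_decomp[of "n-2"] hB0 by (simp add: p_eq)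
  have hA1: "Q (n-1) = (u1*v3 + u3*v1) + w1 * p (n-1)" using Q_decomp[of "n-1"] hB1 by (simp add: p_eq)
  have hA2: "Q n = (u1*v2 + u2*v1) + w1 * p n" using Q_decomp[of "n"] hB2 by (simp add: p_eq)
  note CA = chA[OF hA0 hA1 hA2]
  have An_eq: "An = u3 * p n + u2 * p (n-1) + u1 * p (n-2)" by (simp add: An_def u1_def u2_def u3_def)
  have Dn_eq: "Dn = v3 * p n + v2 * p (n-1) + v1 * p (n-2)" by (simp add: Dn_def v1_def v2_def v3_def)
  have ev0u: "ev0 u1 = u1" "ev0 u2 = u2" "ev0 u3 = u3" "ev0 v1 = v1" "ev0 v2 = v2" "ev0 v3 = v3"
    by (simp_all add: u1_def u2_def u3_def v1_def v2_def v3_def)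
  have Bnz: "u2*v3 + u3*v2 \<noteq> 0 \<or> u1*v3 + u3*v1 \<noteq> 0 \<or> u1*v2 + u2*v1 \<noteq> 0"
  proof -
    have "\<exists>k. n - 2 = 2*k \<or> n - 1 = 2*k"
    proof (cases "even (n-2)")
      case True then show ?thesis by (auto simp: dvd_def)
    next
      case False then have "even (n-1)" using n2 by (metis Suc_diff_Suc even_Suc numeral_2_eq_2 diff_Suc_1 Suc_pred less_le_trans zero_less_numeral n2 Suc_le_lessD)
      then show ?thesis by (auto simp: dvd_def)
    qed
    then show ?thesis using q_nz_even hB0 hB1 by metis
  qed
  have PA: "w1 * An \<in> Iid n" unfolding An_eq CA(1) by (rule Iid_gen)
  have PD: "w1 * Dn \<in> Iid n" unfolding Dn_eq CA(2) by (rule Iid_gen)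
  have hp: "whomog (int k - 1) (p k)" for k using hpr[of k] by (simp add: p_eq)
  have ij1: "int (j-1) = int j - 1" "int (j-2) = int j - 2" "int (i-1) = int i - 1"
    "int (n-1) = int n - 1" "int (n-2) = int n - 2" "int (i+1) = int i + 1" using i1 j2 n2 by auto
  have HA: "whomog degA An"
  proof -
    have a: "whomog (2 * int (j-1) + (int n - 1)) (r (j-1) * p n)" by (rule whomog_mult[OF hr hp])
    have b: "whomog (3 + 2 * int (j-2) + (int (n-1) - 1)) (w3 * r (j-2) * p (n-1))"
      by (rule whomog_mult[OF whomog_mult[OF whomog_w3 hr] hp])
    have c: "whomog (2 * int j + (int (n-2) - 1)) (r j * p (n-2))" by (rule whomog_mult[OF hr hp])
    have "whomog degA (r (j-1) * p n)" by (rule whomog_cong[OF a]) (use ij1 jI pI in \<open>simp add: degA_def\<close>)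
    moreover have "whomog degA (w3 * r (j-2) * p (n-1))" by (rule whomog_cong[OF b]) (use ij1 jI pI in \<open>simp add: degA_def\<close>)
    moreover have "whomog degA (r j * p (n-2))" by (rule whomog_cong[OF c]) (use ij1 jI pI in \<open>simp add: degA_def\<close>)
    ultimately show ?thesis unfolding An_def by (intro whomog_add)
  qed
  have HD: "whomog degD Dn"
  proof -
    have a: "whomog (int i + (int n - 1)) (q i * p n)" by (rule whomog_mult[OF hq hp])
    have b: "whomog (int (i+1) + (int (n-1) - 1)) (q (i+1) * p (n-1))" by (rule whomog_mult[OF hq hp])
    have c: "whomog (3 + int (i-1) + (int (n-2) - 1)) (w3 * q (i-1) * p (n-2))"
      by (rule whomog_mult[OF whomog_mult[OF whomog_w3 hq] hp])
    have "whomog degD (q i * p n)" by (rule whomog_cong[OF a]) (use ij1 iI pI in \<open>simp add: degD_def\<close>)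
    moreover have "whomog degD (q (i+1) * p (n-1))" by (rule whomog_cong[OF b]) (use ij1 iI pI in \<open>simp add: degD_def\<close>)
    moreover have "whomog degD (w3 * q (i-1) * p (n-2))" by (rule whomog_cong[OF c]) (use ij1 iI pI in \<open>simp add: degD_def\<close>)
    ultimately show ?thesis unfolding Dn_def by (intro whomog_add)
  qed
  have H6: "whomog (2 * int n - 4 - degA) (q i) \<and> whomog (2 * int n - 4 - degD) (r (j-1))
    \<and> whomog (2 * int n - 3 - degA) (q (i+1)) \<and> whomog (2 * int n - 3 - degD) (w3 * r (j-2))
    \<and> whomog (2 * int n - 2 - degA) (w3 * q (i-1)) \<and> whomog (2 * int n - 2 - degD) (r j)"
  proof (intro conjI)
    show "whomog (2 * int n - 4 - degA) (q i)" by (rule whomog_cong[OF hq]) (use iI pI in \<open>simp add: degA_def\<close>)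
    show "whomog (2 * int n - 4 - degD) (r (j-1))" by (rule whomog_cong[OF hr]) (use ij1 jI pI in \<open>simp add: degD_def\<close>)
    show "whomog (2 * int n - 3 - degA) (q (i+1))" by (rule whomog_cong[OF hq]) (use ij1 iI pI in \<open>simp add: degA_def\<close>)
    show "whomog (2 * int n - 3 - degD) (w3 * r (j-2))" by (rule whomog_cong[OF whomog_mult[OF whomog_w3 hr]]) (use ij1 jI pI in \<open>simp add: degD_def\<close>)
    show "whomog (2 * int n - 2 - degA) (w3 * q (i-1))" by (rule whomog_cong[OF whomog_mult[OF whomog_w3 hq]]) (use ij1 iI pI in \<open>simp add: degA_def\<close>)
    show "whomog (2 * int n - 2 - degD) (r j)" by (rule whomog_cong[OF hr]) (use jI pI in \<open>simp add: degD_def\<close>)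
  qed
  have sg: "(a*u1+d*v1)*Q (n-2) + (a*u2+d*v2)*Q (n-1) + (a*u3+d*v3)*Q n = w1*(a*An + d*Dn)" for a d
    using CA(6)[of a d] unfolding An_eq Dn_eq .
  have nS: "Suc (n-2) = n-1" "Suc (Suc (n-2)) = n" "n-2+1 = n-1" "n-2+2 = n" "Suc (n-1) = n" using n2 by auto
  have gcdq: "is_unit (gcd (u2*v3 - u3*v2) (gcd (u3*v1 - u1*v3) (u1*v2 - u2*v1)))"
  proof -
    have "is_unit (gcd (q (n-2)) (gcd (q (n-1)) (q n)))" using q_gcd3[of "n-2"] unfolding nS .
    then show ?thesis unfolding hB0 hB1 hB2 by (simp add: diff_W add.commute)
  qed
  have Bnz': "u2*v3 - u3*v2 \<noteq> 0 \<or> u3*v1 - u1*v3 \<noteq> 0 \<or> u1*v2 - u2*v1 \<noteq> 0"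
    using Bnz by (simp add: diff_W add.commute)
  have PC: "\<forall>x. w1 * x \<in> Iid n \<longrightarrow>
          (\<exists>a d. inW2 a \<and> inW2 d \<and> x - (a * An + d * Dn) \<in> Iid n)"
  proof (intro allI impI)
    fix x assume "w1 * x \<in> Iid n"
    then obtain \<alpha> \<beta> \<gamma> where hx: "w1 * x = \<alpha> * Q (n-2) + \<beta> * Q (n-1) + \<gamma> * Q n"
      by (auto simp: Iid_iff)
    have "ev0 (w1 * x) = ev0 \<alpha> * q (n-2) + ev0 \<beta> * q (n-1) + ev0 \<gamma> * q n" unfolding hx by simp
    then have syz0: "ev0 \<alpha> * (u2*v3 + u3*v2) + ev0 \<beta> * (u1*v3 + u3*v1) + ev0 \<gamma> * (u1*v2 + u2*v1) = 0"
      unfolding hB0 hB1 hB2 by simp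
    have syz: "ev0 \<alpha> * (u2*v3 - u3*v2) + ev0 \<beta> * (u3*v1 - u1*v3) + ev0 \<gamma> * (u1*v2 - u2*v1) = 0"
      using syz0 by (simp add: diff_W add.commute)
    obtain a0 d0 where ad: "ev0 \<alpha> = a0*u1 + d0*v1" "ev0 \<beta> = a0*u2 + d0*v2" "ev0 \<gamma> = a0*u3 + d0*v3"
      using HB[OF syz gcdq Bnz'] by blast
    define a' where "a' = ev0 a0"
    define d' where "d' = ev0 d0"
    have ad': "ev0 \<alpha> = a'*u1 + d'*v1" "ev0 \<beta> = a'*u2 + d'*v2" "ev0 \<gamma> = a'*u3 + d'*v3"
      using arg_cong[OF ad(1), of ev0] arg_cong[OF ad(2), of ev0] arg_cong[OF ad(3), of ev0]
      by (simp_all add: a'_def d'_def ev0u)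
    have dec: "\<alpha> = ev0 \<alpha> + w1 * dw1 \<alpha>" "\<beta> = ev0 \<beta> + w1 * dw1 \<beta>" "\<gamma> = ev0 \<gamma> + w1 * dw1 \<gamma>"
      by (rule ev0_decomp)+
    have "w1 * x = (ev0 \<alpha> * Q (n-2) + ev0 \<beta> * Q (n-1) + ev0 \<gamma> * Q n)
        + w1 * (dw1 \<alpha> * Q (n-2) + dw1 \<beta> * Q (n-1) + dw1 \<gamma> * Q n)"
      using hx dec by algebra
    also have "ev0 \<alpha> * Q (n-2) + ev0 \<beta> * Q (n-1) + ev0 \<gamma> * Q n = w1*(a'*An + d'*Dn)"
      unfolding ad' by (rule sg)
    finally have "w1 * x = w1 * (a'*An + d'*Dn + (dw1 \<alpha> * Q (n-2) + dw1 \<beta> * Q (n-1) + dw1 \<gamma> * Q n))"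
      by (simp add: algebra_simps)
    then have "x = a'*An + d'*Dn + (dw1 \<alpha> * Q (n-2) + dw1 \<beta> * Q (n-1) + dw1 \<gamma> * Q n)"
      using w1_nz by simp
    then have "x - (a' * An + d' * Dn) = dw1 \<alpha> * Q (n-2) + dw1 \<beta> * Q (n-1) + dw1 \<gamma> * Q n"
      by (metis add_diff_cancel_left')
    then have "x - (a' * An + d' * Dn) \<in> Iid n" by (simp only: Iid_gen)
    moreover have "inW2 a'" "inW2 d'" by (simp_all add: a'_def d'_def inW2_ev0)
    ultimately show "\<exists>a d. inW2 a \<and> inW2 d \<and> x - (a * An + d * Dn) \<in> Iid n" by blast
  qed
  have PDr: "\<forall>a d. inW2 a \<and> inW2 d \<longrightarrow>
          (a * An + d * Dn \<in> Iid n \<longleftrightarrow>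
            (\<exists>c1 c2 c3. inW2 c1 \<and> inW2 c2 \<and> inW2 c3
               \<and> a - (c1 * q i + c2 * q (i+1) + c3 * (w3 * q (i-1))) \<in> Jid n
               \<and> d - (c1 * r (j-1) + c2 * (w3 * r (j-2)) + c3 * r j) \<in> Jid n))"
  proof (intro allI impI)
    fix a d assume ad: "inW2 a \<and> inW2 d"
    have ea: "ev0 a = a" "ev0 d = d" using ad by (simp_all add: ev0_id)
    show "a * An + d * Dn \<in> Iid n \<longleftrightarrow>
            (\<exists>c1 c2 c3. inW2 c1 \<and> inW2 c2 \<and> inW2 c3
               \<and> a - (c1 * q i + c2 * q (i+1) + c3 * (w3 * q (i-1))) \<in> Jid n
               \<and> d - (c1 * r (j-1) + c2 * (w3 * r (j-2)) + c3 * r j) \<in> Jid n)"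
    proof
      assume "a * An + d * Dn \<in> Iid n"
      then obtain \<iota>0 \<iota>1 \<iota>2 where hi: "a * An + d * Dn = \<iota>0 * Q (n-2) + \<iota>1 * Q (n-1) + \<iota>2 * Q n"
        by (auto simp: Iid_iff)
      have "(a*u1+d*v1 - w1*\<iota>0) * Q (n-2) + (a*u2+d*v2 - w1*\<iota>1) * Q (n-2+1) + (a*u3+d*v3 - w1*\<iota>2) * Q (n-2+2) = 0"
        unfolding nS using sg[of a d] hi by algebra
      then obtain c1 c2 c3 where kc:
        "a*u1+d*v1 - w1*\<iota>0 = c2 * Q (n-2+2) - c3 * Q (n-2+1)"
        "a*u2+d*v2 - w1*\<iota>1 = c3 * Q (n-2) - c1 * Q (n-2+2)"
        "a*u3+d*v3 - w1*\<iota>2 = c1 * Q (n-2+1) - c2 * Q (n-2)"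
        using koszul by blast
      have k1: "a*u1 + d*v1 = ev0 c2 * (u1*v2 + u2*v1) + ev0 c3 * (u1*v3 + u3*v1)"
        using arg_cong[OF kc(1), of ev0] unfolding nS by (simp add: ea ev0u diff_W hB1[simplified] hB2)
      have k2: "a*u2 + d*v2 = ev0 c3 * (u2*v3 + u3*v2) + ev0 c1 * (u1*v2 + u2*v1)"
        using arg_cong[OF kc(2), of ev0] unfolding nS by (simp add: ea ev0u diff_W hB0 hB2)
      have k3: "a*u3 + d*v3 = ev0 c1 * (u1*v3 + u3*v1) + ev0 c2 * (u2*v3 + u3*v2)"
        using arg_cong[OF kc(3), of ev0] unfolding nS by (simp add: ea ev0u diff_W hB0 hB1[simplified])
      note K = chK[OF k1 k2 k3 Bnz]
      have "a - (ev0 c3 * q i + ev0 c2 * q (i+1) + ev0 c1 * (w3 * q (i-1))) = 0"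
        using K(1) unfolding v1_def v2_def v3_def by (simp add: algebra_simps)
      moreover have "d - (ev0 c3 * r (j-1) + ev0 c2 * (w3 * r (j-2)) + ev0 c1 * r j) = 0"
        using K(2) unfolding u1_def u2_def u3_def by (simp add: algebra_simps)
      ultimately show "\<exists>c1 c2 c3. inW2 c1 \<and> inW2 c2 \<and> inW2 c3
               \<and> a - (c1 * q i + c2 * q (i+1) + c3 * (w3 * q (i-1))) \<in> Jid n
               \<and> d - (c1 * r (j-1) + c2 * (w3 * r (j-2)) + c3 * r j) \<in> Jid n"
        using zero_Jid inW2_ev0 by metis
    next
      assume "\<exists>c1 c2 c3. inW2 c1 \<and> inW2 c2 \<and> inW2 c3
               \<and> a - (c1 * q i + c2 * q (i+1) + c3 * (w3 * q (i-1))) \<in> Jid n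
               \<and> d - (c1 * r (j-1) + c2 * (w3 * r (j-2)) + c3 * r j) \<in> Jid n"
      then obtain c1 c2 c3 where
        ja: "a - (c1 * v3 + c2 * v2 + c3 * v1) \<in> Jid n" and
        jd: "d - (c1 * u3 + c2 * u2 + c3 * u1) \<in> Jid n"
        unfolding u1_def u2_def u3_def v1_def v2_def v3_def by blast
      have eq: "a * An + d * Dn = (c1 * (v3*An + u3*Dn) + c2 * (v2*An + u2*Dn) + c3 * (v1*An + u1*Dn))
          + ((a - (c1 * v3 + c2 * v2 + c3 * v1)) * An + (d - (c1 * u3 + c2 * u2 + c3 * u1)) * Dn)"
        by (simp add: algebra_simps)
      have r3: "v3*An + u3*Dn \<in> Iid n" unfolding An_eq Dn_eq CA(3)
        using Iid_gen[of "p (n-1)" n "p (n-2)" 0] by simp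
      have r2: "v2*An + u2*Dn \<in> Iid n" unfolding An_eq Dn_eq CA(4)
        using Iid_gen[of "p n" n 0 "p (n-2)"] by simp
      have r1: "v1*An + u1*Dn \<in> Iid n" unfolding An_eq Dn_eq CA(5)
        using Iid_gen[of 0 n "p n" "p (n-1)"] by simp
      have "c1 * (v3*An + u3*Dn) + c2 * (v2*An + u2*Dn) + c3 * (v1*An + u1*Dn) \<in> Iid n"
        by (rule Iid_add[OF Iid_add[OF Iid_mult[OF r3] Iid_mult[OF r2]] Iid_mult[OF r1]])
      moreover have "(a - (c1 * v3 + c2 * v2 + c3 * v1)) * An + (d - (c1 * u3 + c2 * u2 + c3 * u1)) * Dn \<in> Iid n"
        by (intro Iid_add Jid_mult[OF ja PA] Jid_mult[OF jd PD])
      ultimately show "a * An + d * Dn \<in> Iid n" unfolding eq by (rule Iid_add)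
    qed
  qed
  show ?thesis using PA PD HA HD PC PDr H6 by blast
qed

end
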